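(* Consider the $L$-layer LSTM described in the context and let $k\in\mathbb{Z}_{\ge0}$. Suppose that $\rho(A^{(l)}_s(k))<1$ for all $l\in[L]$. Then the LSTM is incrementally input-to-state stable on initial states in $\prod_{l=1}^L\mathcal{S}^{(l)}(k)$: there exist continuous $\beta\in\mathcal{KL}$ and $\gamma\in\mathcal{K}_\infty$ such that for all initial states $s_1(0),s_2(0)$ with $s^{(l)}_1(0),s^{(l)}_2(0)\in\mathcal{S}^{(l)}(k)$ for every $l\in[L]$, all input sequences $x_1(0:t),x_2(0:t)\in[-x_{\max},x_{\max}]^{n_x\times(t+1)}$, and all $t\in\mathbb{Z}_{\ge0}$, $\|s_1(t)-s_2(t)\|\le\beta(\|s_1(0)-s_2(0)\|,t)+\gamma(\|x_1(0:t)-x_2(0:t)\|_{2,\infty})$, where $s_i(t)$ is the state generated from $s_i(0)$ with input $x_i$. Furthermore, $\rho(A^{(l)}_s(k+1))\le\rho(A^{(l)}_s(k))$ for all $k\in\mathbb{Z}_{\ge0}$ and $l\in[L]$.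
   Context: LSTM: fix $L\in\mathbb{N}$, dimensions $n_x,n_c$, and $x_{\max}>0$. For $l\in[L]$ let $n^{(l)}=n_x$ if $l=1$, $n^{(l)}=n_c$ if $l\ge2$; weights $W^{(l)}_*\in\mathbb{R}^{n_c\times n^{(l)}}$, $U^{(l)}_*\in\mathbb{R}^{n_c\times n_c}$, biases $b^{(l)}_*\in\mathbb{R}^{n_c}$, $*\in\{f,i,c,o\}$. With $\sigma(w)=1/(1+e^{-w})$, $\phi=\tanh$ (componentwise), $\odot$ componentwise product, for $t\in\mathbb{Z}_{\ge0}$: $c^{(l)}(t+1)=\sigma(W^{(l)}_f x^{(l)}(t)+U^{(l)}_f h^{(l)}(t)+b^{(l)}_f)\odot c^{(l)}(t)+\sigma(W^{(l)}_i x^{(l)}(t)+U^{(l)}_i h^{(l)}(t)+b^{(l)}_i)\odot\phi(W^{(l)}_c x^{(l)}(t)+U^{(l)}_c h^{(l)}(t)+b^{(l)}_c)$, $h^{(l)}(t+1)=\sigma(W^{(l)}_o x^{(l)}(t)+U^{(l)}_o h^{(l)}(t)+b^{(l)}_o)\odot\phi(c^{(l)}(t+1))$, with $x^{(1)}(t)=x(t)\in[-x_{\max},x_{\max}]^{n_x}$, $x^{(l)}(t)=h^{(l-1)}(t+1)$ for $l\ge2$. The state is $s(t)=(s^{(1)}(t),\dots,s^{(L)}(t))$ with $s^{(l)}(t)=(c^{(l)}(t),h^{(l)}(t))$. Quantities: $x^{(l)}_{\max}=x_{\max}$ if $l=1$, $=1$ if $l\ge2$; $|A|$ entrywise absolute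 value; $\mathbf{1}_n$ all-ones vector; $v_+$ componentwise positive part; $\|\cdot\|_\infty$ max norm. For $\eta\ge0$, $*\in\{f,i,o\}$: $G^{(l)}_*(\eta)=\|(x^{(l)}_{\max}|W^{(l)}_*|\mathbf{1}_{n^{(l)}}+\eta|U^{(l)}_*|\mathbf{1}_{n_c}+b^{(l)}_* )_+\|_\infty$, $G^{(l)}_c(\eta)=\|x^{(l)}_{\max}|W^{(l)}_c|\mathbf{1}_{n^{(l)}}+\eta|U^{(l)}_c|\mathbf{1}_{n_c}+|b^{(l)}_c|\|_\infty$. With $\eta^{(l)}(-1)=1$ and $k\ge0$: $\overline{\sigma}^{(l)}_*(k)=\sigma(G^{(l)}_*(\eta^{(l)}(k-1)))$, $\overline{\phi}^{(l)}_c(k)=\phi(G^{(l)}_c(\eta^{(l)}(k-1)))$, $\overline{c}^{(l)}(k)=\overline{\sigma}^{(l)}_i(k)\overline{\phi}^{(l)}_c(k)/(1-\overline{\sigma}^{(l)}_f(k))$, $\eta^{(l)}(k)=\phi(\overline{c}^{(l)}(k))\overline{\sigma}^{(l)}_o(k)$. $\mathcal{S}^{(l)}(k)=\{(c,h)\in\mathbb{R}^{n_c}\times\mathbb{R}^{n_c}:\|c\|_\infty\le\overline{c}^{(l)}(k),\ \|h\|_\infty\le\phi(\overline{c}^{(l)}(k))\overline{\sigma}^{(l)}_o(k)\}$. Matrix: with $\|\cdot\|$ the Euclidean norm / induced 2-norm, $\alpha^{(l)}_s(k)=\tfrac14\|U^{(l)}_f\|\overline{c}^{(l)}(k)+\overline{\sigma}^{(l)}_i(k)\|U^{(l)}_c\|+\tfrac14\|U^{(l)}_i\|\overline{\phi}^{(l)}_c(k)$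 and $A^{(l)}_s(k)=\begin{bmatrix}\overline{\sigma}^{(l)}_f(k)&\alpha^{(l)}_s(k)\\ \overline{\sigma}^{(l)}_o(k)\overline{\sigma}^{(l)}_f(k)&\alpha^{(l)}_s(k)\overline{\sigma}^{(l)}_o(k)+\tfrac14\phi(\overline{c}^{(l)}(k))\|U^{(l)}_o\|\end{bmatrix}$; $\rho$ denotes spectral radius. Notation: $\|v(0:t)\|_{2,\infty}=\max_{0\le\tau\le t}\|v(\tau)\|_2$. A function $\alpha:\mathbb{R}_{\ge0}\to\mathbb{R}_{\ge0}$ is class $\mathcal{K}$ if continuous, strictly increasing, $\alpha(0)=0$; class $\mathcal{K}_\infty$ if moreover unbounded; $\beta$ is class $\mathcal{KL}$ if $\beta(\cdot,t)\in\mathcal{K}$ for each $t$ and $\beta(s,\cdot)$ is decreasing with $\beta(s,t)\to0$ as $t\to\infty$. *)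

theory Defs
  imports "HOL-Analysis.Analysis"
begin

datatype gate = GF | GI | GC | GO

definition sigm :: "real \<Rightarrow> real" where
  "sigm w = 1 / (1 + exp (- w))"

definition vsig :: "real^'n \<Rightarrow> real^'n" where
  "vsig v = (\<chi> i. sigm (v $ i))"

definition vtanh :: "real^'n \<Rightarrow> real^'n" where
  "vtanh v = (\<chi> i. tanh (v $ i))"

definition hadamard :: "real^'n \<Rightarrow> real^'n \<Rightarrow> real^'n" where
  "hadamard u v = (\<chi> i. u $ i * v $ i)"

text \<open>One LSTM cell update. \<open>wx g\<close> is the input contribution \<open>W_g x\<close>;
  the state is the pair (c, h).\<close>
definition cell_step ::
  "(gate \<Rightarrow> real^'c) \<Rightarrow> (gate \<Rightarrow> real^'c^'c) \<Rightarrow> (gate \<Rightarrow> real^'c)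
   \<Rightarrow> (real^'c) \<times> (real^'c) \<Rightarrow> (real^'c) \<times> (real^'c)" where
  "cell_step wx U b s =
    (let c = fst s; h = snd s;
         z = (\<lambda>g. wx g + U g *v h + b g);
         c' = hadamard (vsig (z GF)) c + hadamard (vsig (z GI)) (vtanh (z GC))
     in (c', hadamard (vsig (z GO)) (vtanh c')))"

text \<open>Trajectory of the L-layer LSTM: \<open>lstm_traj Wx Wh U b x s0 t l\<close> is
  \<open>s^(l)(t)\<close>.
  Layer index 0 is unused (junk).\<close>
fun lstm_traj ::
  "(gate \<Rightarrow> real^'x^'c) \<Rightarrow> (nat \<Rightarrow> gate \<Rightarrow> real^'c^'c) \<Rightarrow> (nat \<Rightarrow> gate \<Rightarrow> real^'c^'c)
   \<Rightarrow> (nat \<Rightarrow> gate \<Rightarrow> real^'c) \<Rightarrow> (nat \<Rightarrow> real^'x) \<Rightarrow> (nat \<Rightarrow> (real^'c) \<times> (real^'c))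
   \<Rightarrow> nat \<Rightarrow> nat \<Rightarrow> (real^'c) \<times> (real^'c)" where
  "lstm_traj Wx Wh U b x s0 0 l = s0 l"
| "lstm_traj Wx Wh U b x s0 (Suc t) 0 = s0 0"
| "lstm_traj Wx Wh U b x s0 (Suc t) (Suc 0) =
     cell_step (\<lambda>g. Wx g *v x t) (U 1) (b 1) (lstm_traj Wx Wh U b x s0 t 1)"
| "lstm_traj Wx Wh U b x s0 (Suc t) (Suc (Suc l)) =
     cell_step (\<lambda>g. Wh (Suc (Suc l)) g *v snd (lstm_traj Wx Wh U b x s0 (Suc t) (Suc l)))
       (U (Suc (Suc l))) (b (Suc (Suc l))) (lstm_traj Wx Wh U b x s0 t (Suc (Suc l)))"

definition vinf :: "real^'n \<Rightarrow> real" where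
  "vinf v = Max (range (\<lambda>i. \<bar>v $ i\<bar>))"

definition rowabs :: "real^'m^'n \<Rightarrow> real^'n" where
  "rowabs W = (\<chi> i. \<Sum>j\<in>UNIV. \<bar>W $ i $ j\<bar>)"

definition vabs :: "real^'n \<Rightarrow> real^'n" where
  "vabs v = (\<chi> i. \<bar>v $ i\<bar>)"

definition vpos :: "real^'n \<Rightarrow> real^'n" where
  "vpos v = (\<chi> i. max (v $ i) 0)"

definition Gfun ::
  "real \<Rightarrow> (gate \<Rightarrow> real^'x^'c) \<Rightarrow> (nat \<Rightarrow> gate \<Rightarrow> real^'c^'c) \<Rightarrow> (nat \<Rightarrow> gate \<Rightarrow> real^'c^'c)
   \<Rightarrow> (nat \<Rightarrow> gate \<Rightarrow> real^'c) \<Rightarrow> nat \<Rightarrow> gate \<Rightarrow> real \<Rightarrow> real" where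
  "Gfun xmax Wx Wh U b l g \<eta> =
    (let xm = (if l = 1 then xmax else 1);
         win = (if l = 1 then rowabs (Wx g) else rowabs (Wh l g));
         v = xm *\<^sub>R win + \<eta> *\<^sub>R rowabs (U l g)
     in if g = GC then vinf (v + vabs (b l g)) else vinf (vpos (v + b l g)))"

text \<open>\<open>eta_prev ... l k = \<eta>^(l)(k-1)\<close>, with \<open>\<eta>^(l)(-1) = 1\<close>.\<close>
fun eta_prev ::
  "real \<Rightarrow> (gate \<Rightarrow> real^'x^'c) \<Rightarrow> (nat \<Rightarrow> gate \<Rightarrow> real^'c^'c) \<Rightarrow> (nat \<Rightarrow> gate \<Rightarrow> real^'c^'c)
   \<Rightarrow> (nat \<Rightarrow> gate \<Rightarrow> real^'c) \<Rightarrow> nat \<Rightarrow> nat \<Rightarrow> real" where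
  "eta_prev xmax Wx Wh U b l 0 = 1"
| "eta_prev xmax Wx Wh U b l (Suc k) =
    (let G = Gfun xmax Wx Wh U b l; e = eta_prev xmax Wx Wh U b l k;
         cb = sigm (G GI e) * tanh (G GC e) / (1 - sigm (G GF e))
     in tanh cb * sigm (G GO e))"

definition sigbar where
  "sigbar xmax Wx Wh U b l g k = sigm (Gfun xmax Wx Wh U b l g (eta_prev xmax Wx Wh U b l k))"

definition phibar where
  "phibar xmax Wx Wh U b l k = tanh (Gfun xmax Wx Wh U b l GC (eta_prev xmax Wx Wh U b l k))"

definition cbar where
  "cbar xmax Wx Wh U b l k =
     sigbar xmax Wx Wh U b l GI k * phibar xmax Wx Wh U b l k / (1 - sigbar xmax Wx Wh U b l GF k)"

definition eta where
  "eta xmax Wx Wh U b l k = tanh (cbar xmax Wx Wh U b l k) * sigbar xmax Wx Wh U b l GO k"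

definition Sset ::
  "real \<Rightarrow> (gate \<Rightarrow> real^'x^'c) \<Rightarrow> (nat \<Rightarrow> gate \<Rightarrow> real^'c^'c) \<Rightarrow> (nat \<Rightarrow> gate \<Rightarrow> real^'c^'c)
   \<Rightarrow> (nat \<Rightarrow> gate \<Rightarrow> real^'c) \<Rightarrow> nat \<Rightarrow> nat \<Rightarrow> ((real^'c) \<times> (real^'c)) set" where
  "Sset xmax Wx Wh U b l k =
    {(c, h). vinf c \<le> cbar xmax Wx Wh U b l k \<and>
             vinf h \<le> tanh (cbar xmax Wx Wh U b l k) * sigbar xmax Wx Wh U b l GO k}"

definition opnorm2 :: "real^'n^'m \<Rightarrow> real" where
  "opnorm2 A = onorm (\<lambda>v. A *v v)"

definition alpha_s where
  "alpha_s xmax Wx Wh U b l k =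
     1/4 * opnorm2 (U l GF) * cbar xmax Wx Wh U b l k
     + sigbar xmax Wx Wh U b l GI k * opnorm2 (U l GC)
     + 1/4 * opnorm2 (U l GI) * phibar xmax Wx Wh U b l k"

definition A_s ::
  "real \<Rightarrow> (gate \<Rightarrow> real^'x^'c) \<Rightarrow> (nat \<Rightarrow> gate \<Rightarrow> real^'c^'c) \<Rightarrow> (nat \<Rightarrow> gate \<Rightarrow> real^'c^'c)
   \<Rightarrow> (nat \<Rightarrow> gate \<Rightarrow> real^'c) \<Rightarrow> nat \<Rightarrow> nat \<Rightarrow> real^2^2" where
  "A_s xmax Wx Wh U b l k =
    (let sf = sigbar xmax Wx Wh U b l GF k; so = sigbar xmax Wx Wh U b l GO k;
         a = alpha_s xmax Wx Wh U b l k
     in vector [vector [sf, a],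
                vector [so * sf, a * so + 1/4 * tanh (cbar xmax Wx Wh U b l k) * opnorm2 (U l GO)]])"

text \<open>Spectral radius of a real 2x2 matrix: the maximum modulus of its
  (complex) eigenvalues, i.e. of the roots of its characteristic polynomial
  \<open>det(z I - A) = z^2 - tr A z + det A\<close>.\<close>
definition spectral_radius2 :: "real^2^2 \<Rightarrow> real" where
  "spectral_radius2 A =
    Max {cmod z | z. z^2 - complex_of_real (A$1$1 + A$2$2) * z
                      + complex_of_real (A$1$1 * A$2$2 - A$1$2 * A$2$1) = 0}"

definition class_K :: "(real \<Rightarrow> real) \<Rightarrow> bool" where
  "class_K \<alpha> \<longleftrightarrow> continuous_on {0..} \<alpha> \<and> strict_mono_on {0..} \<alpha> \<and> \<alpha> 0 = 0
                  \<and> (\<forall>s\<ge>0. \<alpha> s \<ge> 0)"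

definition class_Kinf :: "(real \<Rightarrow> real) \<Rightarrow> bool" where
  "class_Kinf \<alpha> \<longleftrightarrow> class_K \<alpha> \<and> (\<forall>M. \<exists>s\<ge>0. \<alpha> s > M)"

definition class_KL :: "(real \<Rightarrow> nat \<Rightarrow> real) \<Rightarrow> bool" where
  "class_KL \<beta> \<longleftrightarrow> (\<forall>t. class_K (\<lambda>s. \<beta> s t)) \<and>
     (\<forall>s\<ge>0. antimono (\<beta> s) \<and> (\<beta> s \<longlonglongrightarrow> 0))"

definition state_dist :: "nat \<Rightarrow> (nat \<Rightarrow> (real^'c) \<times> (real^'c)) \<Rightarrow> (nat \<Rightarrow> (real^'c) \<times> (real^'c)) \<Rightarrow> real" where
  "state_dist L s1 s2 = sqrt (\<Sum>l\<in>{1..L}. (norm (s1 l - s2 l))^2)"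

definition input_dist :: "nat \<Rightarrow> (nat \<Rightarrow> real^'x) \<Rightarrow> (nat \<Rightarrow> real^'x) \<Rightarrow> real" where
  "input_dist t x1 x2 = Max ((\<lambda>\<tau>. norm (x1 \<tau> - x2 \<tau>)) ` {0..t})"

end

theory Submission
  imports Defs
begin


lemma sigm_tanh: "sigm x = (1 + tanh (x/2)) / 2"
proof -
  have "tanh (x/2) = (1 - exp (- x)) / (1 + exp (- x))"
    by (simp add: tanh_real_altdef)
  moreover have "1 + exp (-x) > 0" by (smt (verit) exp_gt_zero)
  ultimately show ?thesis unfolding sigm_def by (simp add: field_simps)
qed

lemma tanh_lipschitz: "\<bar>tanh x - tanh y\<bar> \<le> \<bar>x - (y::real)\<bar>"
proof -
  have key: "tanh b - tanh a \<le> b - a" if "a < b" for a b :: real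
  proof -
    have "\<exists>z. a < z \<and> z < b \<and> tanh b - tanh a = (b - a) * (1 - tanh z ^ 2)"
      by (rule MVT2[OF that]) (auto intro!: derivative_eq_intros)
    then obtain z where z: "tanh b - tanh a = (b - a) * (1 - tanh z ^ 2)" by blast
    have "0 \<le> tanh z ^ 2" by simp
    then have "(b - a) * (1 - tanh z ^ 2) \<le> (b - a) * 1"
      using that by (intro mult_left_mono) auto
    then show ?thesis using z by simp
  qed
  show ?thesis
  proof (cases x y rule: linorder_cases)
    case less then show ?thesis using key[OF less] tanh_real_less_iff[of x y] by auto
  next
    case equal then show ?thesis by simp
  next
    case greater then show ?thesis using key[OF greater] tanh_real_less_iff[of y x] by auto
  qed
qed

lemma half_lip_aux: "\<bar>a - b\<bar> \<le> \<bar>x / 2 - y / 2\<bar> \<Longrightarrow> p - q = (a - b) / 2 \<Longrightarrow> \<bar>p - q\<bar> \<le> 1 / 4 * \<bar>x - (y::real)\<bar>"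
  by (simp add: abs_if split: if_splits)

lemma sigm_lipschitz: "\<bar>sigm x - sigm y\<bar> \<le> 1/4 * \<bar>x - y\<bar>"
proof -
  have "\<bar>tanh (x/2) - tanh (y/2)\<bar> \<le> \<bar>x/2 - y/2\<bar>" by (rule tanh_lipschitz)
  moreover have "sigm x - sigm y = (tanh (x/2) - tanh (y/2)) / 2" by (simp add: sigm_tanh field_simps)
  ultimately show ?thesis by (rule half_lip_aux)
qed

lemma sigm_pos: "0 < sigm x" and sigm_lt1: "sigm x < 1"
  using tanh_real_bounds[of "x/2"] by (auto simp: sigm_tanh)

lemma sigm_mono: "x \<le> y \<Longrightarrow> sigm x \<le> sigm y"
  by (simp add: sigm_tanh)

lemma tanh_abs_lt1: "\<bar>tanh (x::real)\<bar> < 1"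
  using tanh_real_bounds[of x] by auto



lemma vinf_ge: "\<bar>v $ i\<bar> \<le> vinf v"
  unfolding vinf_def by (rule Max_ge) auto

lemma vinf_le: "(\<And>i. \<bar>v $ i\<bar> \<le> M) \<Longrightarrow> vinf v \<le> M"
  unfolding vinf_def by (subst Max_le_iff) auto

lemma vinf_nonneg: "0 \<le> vinf v"
  using vinf_ge[of v] abs_ge_zero order_trans by blast

lemma vinf_mono: "(\<And>i. \<bar>u $ i\<bar> \<le> \<bar>w $ i\<bar>) \<Longrightarrow> vinf u \<le> vinf w"
  by (rule vinf_le) (meson order_trans vinf_ge)

lemma norm_hadamard_le:
  assumes "\<And>i. \<bar>u $ i\<bar> \<le> M"
  shows "norm (hadamard u v) \<le> M * norm v"
proof -
  have M: "0 \<le> M" using assms[of undefined] by linarith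
  have "norm (hadamard u v) \<le> norm (M *\<^sub>R v)"
    by (rule norm_le_componentwise_cart)
       (auto simp: hadamard_def abs_mult M intro!: mult_right_mono assms)
  then show ?thesis using M by simp
qed

lemma norm_vsig_lip: "norm (vsig a - vsig b) \<le> 1/4 * norm (a - b)"
proof -
  have "norm (vsig a - vsig b) \<le> norm ((1/4::real) *\<^sub>R (a - b))"
    by (rule norm_le_componentwise_cart) (simp add: vsig_def, metis sigm_lipschitz mult.commute divide_inverse mult_1 le_divide_eq_numeral1(1) zero_less_numeral)
  then show ?thesis by simp
qed

lemma norm_vtanh_lip: "norm (vtanh a - vtanh b) \<le> norm (a - b)"
  by (rule norm_le_componentwise_cart) (auto simp: vtanh_def tanh_lipschitz)

lemma opnorm2_nonneg: "0 \<le> opnorm2 A"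
  unfolding opnorm2_def by (rule onorm_pos_le) simp

lemma opnorm2_bound: "norm (A *v x) \<le> opnorm2 A * norm x"
  unfolding opnorm2_def by (rule onorm) simp

lemma rowabs_nonneg: "0 \<le> rowabs W $ i"
  by (simp add: rowabs_def sum_nonneg)

lemma mv_comp_bound:
  assumes "\<And>j. \<bar>x $ j\<bar> \<le> m"
  shows "\<bar>(W *v x) $ i\<bar> \<le> m * rowabs W $ i"
proof -
  have "\<bar>(W *v x) $ i\<bar> = \<bar>\<Sum>j\<in>UNIV. W $ i $ j * x $ j\<bar>"
    by (simp add: matrix_vector_mult_def)
  also have "\<dots> \<le> (\<Sum>j\<in>UNIV. \<bar>W $ i $ j\<bar> * m)"
    by (rule order_trans[OF sum_abs]) (auto intro!: sum_mono simp: abs_mult intro: mult_left_mono assms)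
  also have "\<dots> = m * rowabs W $ i"
    by (simp add: rowabs_def sum_distrib_left mult.commute)
  finally show ?thesis .
qed

lemma norm_diff_sq: "(norm (s1 - s2 :: (real^'c) \<times> (real^'c)))^2
   = (norm (fst s1 - fst s2))^2 + (norm (snd s1 - snd s2))^2"
  by (simp add: norm_prod_def)



lemma sr2_formula:
  fixes A :: "real^2^2"
  assumes "A$1$1 \<ge> 0" "A$1$2 \<ge> 0" "A$2$1 \<ge> 0" "A$2$2 \<ge> 0"
  shows "spectral_radius2 A = (A$1$1 + A$2$2 + sqrt ((A$1$1 - A$2$2)^2 + 4 * (A$1$2 * A$2$1))) / 2"
proof -
  define a where "a = A$1$1" define bb where "bb = A$1$2"
  define c where "c = A$2$1" define d where "d = A$2$2"
  define q where "q = sqrt ((a - d)^2 + 4 * (bb * c))"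
  have q0: "q \<ge> 0" unfolding q_def using assms by (simp add: a_def bb_def c_def d_def)
  have qsq: "q^2 = (a - d)^2 + 4 * (bb * c)"
    unfolding q_def using assms by (simp add: a_def bb_def c_def d_def)
  define r1 where "r1 = (a + d + q) / 2"
  define r2 where "r2 = (a + d - q) / 2"
  have sum: "r1 + r2 = a + d" by (simp add: r1_def r2_def field_simps)
  have prod: "r1 * r2 = a * d - bb * c"
  proof -
    have "r1 * r2 = ((a + d)^2 - q^2) / 4" by (simp add: r1_def r2_def field_simps power2_eq_square)
    also have "\<dots> = ((a + d)^2 - ((a - d)^2 + 4 * (bb * c))) / 4" by (simp add: qsq)
    also have "\<dots> = a * d - bb * c" by (simp add: field_simps power2_eq_square)
    finally show ?thesis .
  qed
  have fac: "z^2 - complex_of_real (a + d) * z + complex_of_real (a * d - bb * c)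
           = (z - complex_of_real r1) * (z - complex_of_real r2)" for z
  proof -
    have "(z - complex_of_real r1) * (z - complex_of_real r2)
        = z^2 - complex_of_real (r1 + r2) * z + complex_of_real (r1 * r2)"
      by (simp add: algebra_simps power2_eq_square)
    then show ?thesis by (simp add: sum prod)
  qed
  have set_eq: "{cmod z | z. z^2 - complex_of_real (a + d) * z + complex_of_real (a * d - bb * c) = 0}
     = {\<bar>r1\<bar>, \<bar>r2\<bar>}"
    unfolding fac apply auto using norm_of_real by metis+
  have ad: "a + d \<ge> 0" using assms by (simp add: a_def d_def)
  have "\<bar>r2\<bar> \<le> \<bar>r1\<bar>" using q0 ad unfolding r1_def r2_def by (auto simp: abs_if field_simps)
  moreover have "r1 \<ge> 0" using q0 ad by (simp add: r1_def)
  ultimately have "Max {\<bar>r1\<bar>, \<bar>r2\<bar>} = r1" by (simp add: max_def)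
  then show ?thesis
    unfolding spectral_radius2_def a_def[symmetric] bb_def[symmetric] c_def[symmetric] d_def[symmetric] set_eq
    by (simp add: r1_def q_def)
qed

lemma sr2_le:
  fixes A :: "real^2^2"
  assumes "A$1$1 \<ge> 0" "A$1$2 \<ge> 0" "A$2$1 \<ge> 0" "A$2$2 \<ge> 0"
    and "A$1$1 \<le> s" "A$2$2 \<le> s" "A$1$2 * A$2$1 \<le> (s - A$1$1) * (s - A$2$2)"
  shows "spectral_radius2 A \<le> s"
proof -
  define a where "a = A$1$1" define bb where "bb = A$1$2"
  define c where "c = A$2$1" define d where "d = A$2$2"
  have h: "a \<le> s" "d \<le> s" "bb * c \<le> (s - a) * (s - d)" "bb \<ge> 0" "c \<ge> 0"
    using assms by (auto simp: a_def bb_def c_def d_def)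
  have "sqrt ((a - d)^2 + 4 * (bb * c)) \<le> sqrt ((2 * s - a - d)^2)"
  proof (rule real_sqrt_le_mono)
    have e: "(2 * s - a - d)^2 - ((a - d)^2 + 4 * (bb * c)) = 4 * ((s - a) * (s - d) - bb * c)"
      by (simp add: power2_eq_square algebra_simps)
    have "(2 * s - a - d)^2 - ((a - d)^2 + 4 * (bb * c)) \<ge> 0" unfolding e using h by simp
    then show "(a - d)^2 + 4 * (bb * c) \<le> (2 * s - a - d)^2" using h by linarith
  qed
  also have "\<dots> = 2 * s - a - d" using h by simp
  finally have "sqrt ((a - d)^2 + 4 * (bb * c)) \<le> 2 * s - a - d" .
  then show ?thesis using sr2_formula[OF assms(1-4)] by (simp add: a_def bb_def c_def d_def)
qed

lemma sr2_lt1: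
  fixes A :: "real^2^2"
  assumes "A$1$1 \<ge> 0" "A$1$2 \<ge> 0" "A$2$1 \<ge> 0" "A$2$2 \<ge> 0"
    and "spectral_radius2 A < 1"
  shows "A$1$1 < 1" "A$2$2 < 1" "A$1$2 * A$2$1 < (1 - A$1$1) * (1 - A$2$2)"
proof -
  define a where "a = A$1$1" define bb where "bb = A$1$2"
  define c where "c = A$2$1" define d where "d = A$2$2"
  define q where "q = sqrt ((a - d)^2 + 4 * (bb * c))"
  have q0: "q \<ge> 0" unfolding q_def using assms by (simp add: a_def bb_def c_def d_def)
  have qsq: "q^2 = (a - d)^2 + 4 * (bb * c)"
    unfolding q_def using assms by (simp add: a_def bb_def c_def d_def)
  have lt: "a + d + q < 2" using sr2_formula[OF assms(1-4)] assms(5)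
    by (simp add: a_def bb_def c_def d_def q_def)
  have "q^2 < (2 - a - d)^2"
    using q0 lt by (intro power_strict_mono) auto
  then have "(a - d)^2 + 4 * (bb * c) < (2 - a - d)^2" using qsq by simp
  then have pos: "0 < (2 - a - d)^2 - ((a - d)^2 + 4 * (bb * c))" by linarith
  have "(1 - a) * (1 - d) - bb * c = ((2 - a - d)^2 - ((a - d)^2 + 4 * (bb * c))) / 4"
    by (simp add: power2_eq_square algebra_simps)
  with pos have p: "bb * c < (1 - a) * (1 - d)" by simp
  have "bb * c \<ge> 0" using assms by (simp add: bb_def c_def)
  then have pp: "(1 - a) * (1 - d) > 0" using p by linarith
  have "a + d < 2" using lt q0 by linarith
  then have "1 - a > 0 \<and> 1 - d > 0" using pp by (auto simp: zero_less_mult_iff)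
  then show "A$1$1 < 1" "A$2$2 < 1" "A$1$2 * A$2$1 < (1 - A$1$1) * (1 - A$2$2)"
    using p by (auto simp: a_def bb_def c_def d_def)
qed

lemma sr2_mono:
  fixes A B :: "real^2^2"
  assumes "0 \<le> A$1$1" "0 \<le> A$1$2" "0 \<le> A$2$1" "0 \<le> A$2$2"
    "A$1$1 \<le> B$1$1" "A$1$2 \<le> B$1$2" "A$2$1 \<le> B$2$1" "A$2$2 \<le> B$2$2"
  shows "spectral_radius2 A \<le> spectral_radius2 B"
proof -
  define s where "s = spectral_radius2 B"
  define a where "a = B$1$1" define bb where "bb = B$1$2"
  define c where "c = B$2$1" define d where "d = B$2$2"
  define q where "q = sqrt ((a - d)^2 + 4 * (bb * c))"
  have B0: "0 \<le> B$1$1" "0 \<le> B$1$2" "0 \<le> B$2$1" "0 \<le> B$2$2" using assms by linarith+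
  have q0: "q \<ge> 0" unfolding q_def using B0 by (simp add: a_def bb_def c_def d_def)
  have qsq: "q^2 = (a - d)^2 + 4 * (bb * c)"
    unfolding q_def using B0 by (simp add: a_def bb_def c_def d_def)
  have s: "s = (a + d + q) / 2" unfolding s_def sr2_formula[OF B0] by (simp add: a_def bb_def c_def d_def q_def)
  have "\<bar>a - d\<bar> \<le> q" unfolding q_def using B0
    by (intro real_le_rsqrt) (auto simp: bb_def c_def)
  then have sa: "a \<le> s" and sd: "d \<le> s" using s by auto
  have eq: "(s - a) * (s - d) = bb * c"
  proof -
    have "(s - a) * (s - d) = (q^2 - (a - d)^2) / 4" unfolding s by (simp add: field_simps power2_eq_square)
    then show ?thesis using qsq by simp
  qed
  have "A$1$2 * A$2$1 \<le> bb * c" unfolding bb_def c_def using assms by (intro mult_mono) auto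
  also have "\<dots> = (s - a) * (s - d)" using eq by simp
  also have "\<dots> \<le> (s - A$1$1) * (s - A$2$2)"
    using sa sd assms by (intro mult_mono) (auto simp: a_def d_def)
  finally show ?thesis unfolding s_def[symmetric]
    using assms sa sd by (intro sr2_le) (auto simp: a_def d_def)
qed



context
  fixes xmax :: real and Wx :: "gate \<Rightarrow> real^'x^'c" and Wh :: "nat \<Rightarrow> gate \<Rightarrow> real^'c^'c"
    and U :: "nat \<Rightarrow> gate \<Rightarrow> real^'c^'c" and b :: "nat \<Rightarrow> gate \<Rightarrow> real^'c"
  assumes xmax_nn: "xmax \<ge> 0"
begin

abbreviation "GG l g \<equiv> Gfun xmax Wx Wh U b l g"
abbreviation "EE l k \<equiv> eta_prev xmax Wx Wh U b l k"

lemma G_nonneg: "0 \<le> GG l g e"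
  unfolding Gfun_def Let_def by (simp add: vinf_nonneg)

lemma G_mono:
  assumes "0 \<le> e" "e \<le> e'"
  shows "GG l g e \<le> GG l g e'"
proof -
  define xm where "xm = (if l = 1 then xmax else 1)"
  define win where "win = (if l = 1 then rowabs (Wx g) else rowabs (Wh l g))"
  have xm: "0 \<le> xm" using xmax_nn by (simp add: xm_def)
  have win: "0 \<le> win $ i" for i by (simp add: win_def rowabs_nonneg)
  have ru: "0 \<le> rowabs (U l g) $ i" for i by (simp add: rowabs_nonneg)
  have v0: "0 \<le> xm * win $ i + e * rowabs (U l g) $ i" for i
    using xm win ru assms by simp
  have v0': "0 \<le> xm * win $ i + e' * rowabs (U l g) $ i" for i
    using xm win ru assms by simp
  have vle: "xm * win $ i + e * rowabs (U l g) $ i \<le> xm * win $ i + e' * rowabs (U l g) $ i" for i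
    using ru assms by (simp add: mult_right_mono)
  show ?thesis
    unfolding Gfun_def Let_def xm_def[symmetric] win_def[symmetric]
  proof (cases "g = GC")
    case True
    then show "(if g = GC then vinf (xm *\<^sub>R win + e *\<^sub>R rowabs (U l g) + vabs (b l g))
          else vinf (vpos (xm *\<^sub>R win + e *\<^sub>R rowabs (U l g) + b l g)))
         \<le> (if g = GC then vinf (xm *\<^sub>R win + e' *\<^sub>R rowabs (U l g) + vabs (b l g))
          else vinf (vpos (xm *\<^sub>R win + e' *\<^sub>R rowabs (U l g) + b l g)))"
      apply simp
      apply (rule vinf_mono)
      subgoal for i using v0[of i] vle[of i] v0'[of i] by (simp add: vabs_def)
      done
  next
    case False
    then show "(if g = GC then vinf (xm *\<^sub>R win + e *\<^sub>R rowabs (U l g) + vabs (b l g))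
          else vinf (vpos (xm *\<^sub>R win + e *\<^sub>R rowabs (U l g) + b l g)))
         \<le> (if g = GC then vinf (xm *\<^sub>R win + e' *\<^sub>R rowabs (U l g) + vabs (b l g))
          else vinf (vpos (xm *\<^sub>R win + e' *\<^sub>R rowabs (U l g) + b l g)))"
      apply simp
      apply (rule vinf_mono)
      subgoal for i using vle[of i] by (simp add: vpos_def max_def)
      done
  qed
qed

definition "cbf l e = sigm (GG l GI e) * tanh (GG l GC e) / (1 - sigm (GG l GF e))"
definition "etastep l e = tanh (cbf l e) * sigm (GG l GO e)"

lemma EE_Suc: "EE l (Suc k) = etastep l (EE l k)"
  by (simp add: etastep_def cbf_def Let_def)

declare eta_prev.simps(2)[simp del]

lemma cbf_nonneg: "0 \<le> cbf l e"
  unfolding cbf_def using sigm_pos sigm_lt1 G_nonneg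
  by (intro divide_nonneg_pos mult_nonneg_nonneg) (auto intro: less_imp_le)

lemma cbf_mono: "0 \<le> e \<Longrightarrow> e \<le> e' \<Longrightarrow> cbf l e \<le> cbf l e'"
  unfolding cbf_def
proof (rule frac_le)
  assume a: "0 \<le> e" "e \<le> e'"
  show "0 \<le> sigm (GG l GI e') * tanh (GG l GC e')"
    using sigm_pos G_nonneg by (simp add: less_imp_le)
  show "sigm (GG l GI e) * tanh (GG l GC e) \<le> sigm (GG l GI e') * tanh (GG l GC e')"
    using sigm_pos G_nonneg G_mono[OF a] sigm_mono[OF G_mono[OF a]]
    by (intro mult_mono) (auto simp: less_imp_le)
  show "0 < 1 - sigm (GG l GF e')" using sigm_lt1 by simp
  show "1 - sigm (GG l GF e') \<le> 1 - sigm (GG l GF e)"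
    using sigm_mono[OF G_mono[OF a]] by simp
qed

lemma etastep_bounds: "0 \<le> etastep l e" "etastep l e \<le> 1"
proof -
  show "0 \<le> etastep l e" unfolding etastep_def using cbf_nonneg sigm_pos
    by (simp add: less_imp_le)
  have "tanh (cbf l e) \<le> 1" using tanh_real_lt_1 less_imp_le by blast
  moreover have "sigm (GG l GO e) \<le> 1" using sigm_lt1 less_imp_le by blast
  ultimately show "etastep l e \<le> 1" unfolding etastep_def using cbf_nonneg sigm_pos
    by (simp add: mult_le_one less_imp_le)
qed

lemma etastep_mono: "0 \<le> e \<Longrightarrow> e \<le> e' \<Longrightarrow> etastep l e \<le> etastep l e'"
  unfolding etastep_def
  using cbf_mono cbf_nonneg sigm_pos G_mono sigm_mono
  by (intro mult_mono) (auto intro: less_imp_le)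

lemma EE_bounds: "0 \<le> EE l k" "EE l k \<le> 1"
  by (cases k; simp add: EE_Suc etastep_bounds)+

lemma EE_dec: "EE l (Suc k) \<le> EE l k"
proof (induction k)
  case 0 then show ?case using EE_bounds(2)[of l 1] by simp
next
  case (Suc k)
  then show ?case unfolding EE_Suc[of l "Suc k"] EE_Suc[of l k]
    using EE_bounds(1)[of l "Suc k"] by (intro etastep_mono) (auto simp: EE_Suc)
qed

lemma sigbar_eq: "sigbar xmax Wx Wh U b l g k = sigm (GG l g (EE l k))"
  by (simp add: sigbar_def)

lemma phibar_eq: "phibar xmax Wx Wh U b l k = tanh (GG l GC (EE l k))"
  by (simp add: phibar_def)

lemma cbar_eq: "cbar xmax Wx Wh U b l k = cbf l (EE l k)"
  by (simp add: cbar_def cbf_def sigbar_def phibar_def)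

lemma eta_eq: "eta xmax Wx Wh U b l k = EE l (Suc k)"
  by (simp add: eta_def EE_Suc etastep_def cbar_eq sigbar_def)

lemma sigbar_dec: "sigbar xmax Wx Wh U b l g (Suc k) \<le> sigbar xmax Wx Wh U b l g k"
  unfolding sigbar_eq using EE_dec EE_bounds by (intro sigm_mono G_mono) auto

lemma phibar_dec: "phibar xmax Wx Wh U b l (Suc k) \<le> phibar xmax Wx Wh U b l k"
  unfolding phibar_eq using EE_dec EE_bounds G_mono by simp

lemma cbar_dec: "cbar xmax Wx Wh U b l (Suc k) \<le> cbar xmax Wx Wh U b l k"
  unfolding cbar_eq using EE_dec EE_bounds by (intro cbf_mono) auto

lemma cbar_nonneg: "0 \<le> cbar xmax Wx Wh U b l k"
  unfolding cbar_eq by (rule cbf_nonneg)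

lemma phibar_nonneg: "0 \<le> phibar xmax Wx Wh U b l k"
  unfolding phibar_eq using G_nonneg by simp

lemma sigbar_pos: "0 < sigbar xmax Wx Wh U b l g k" and sigbar_lt1: "sigbar xmax Wx Wh U b l g k < 1"
  unfolding sigbar_eq by (rule sigm_pos, rule sigm_lt1)

lemma alpha_nonneg: "0 \<le> alpha_s xmax Wx Wh U b l k"
  unfolding alpha_s_def using opnorm2_nonneg cbar_nonneg sigbar_pos phibar_nonneg
  by (intro add_nonneg_nonneg mult_nonneg_nonneg) (auto intro: less_imp_le)

lemma alpha_dec: "alpha_s xmax Wx Wh U b l (Suc k) \<le> alpha_s xmax Wx Wh U b l k"
  unfolding alpha_s_def using opnorm2_nonneg cbar_dec sigbar_dec phibar_dec
  by (intro add_mono mult_left_mono mult_right_mono) auto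

lemma A_s_entries:
  "A_s xmax Wx Wh U b l k $ 1 $ 1 = sigbar xmax Wx Wh U b l GF k"
  "A_s xmax Wx Wh U b l k $ 1 $ 2 = alpha_s xmax Wx Wh U b l k"
  "A_s xmax Wx Wh U b l k $ 2 $ 1 = sigbar xmax Wx Wh U b l GO k * sigbar xmax Wx Wh U b l GF k"
  "A_s xmax Wx Wh U b l k $ 2 $ 2 = alpha_s xmax Wx Wh U b l k * sigbar xmax Wx Wh U b l GO k
      + 1/4 * tanh (cbar xmax Wx Wh U b l k) * opnorm2 (U l GO)"
  by (simp_all add: A_s_def Let_def)

lemma A_s_nonneg:
  "0 \<le> A_s xmax Wx Wh U b l k $ 1 $ 1" "0 \<le> A_s xmax Wx Wh U b l k $ 1 $ 2"
  "0 \<le> A_s xmax Wx Wh U b l k $ 2 $ 1" "0 \<le> A_s xmax Wx Wh U b l k $ 2 $ 2"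
  unfolding A_s_entries
  using sigbar_pos[THEN less_imp_le] alpha_nonneg cbar_nonneg opnorm2_nonneg
  by (auto intro!: add_nonneg_nonneg mult_nonneg_nonneg)

lemma sr_dec: "spectral_radius2 (A_s xmax Wx Wh U b l (Suc k)) \<le> spectral_radius2 (A_s xmax Wx Wh U b l k)"
proof (rule sr2_mono[OF A_s_nonneg])
  show "A_s xmax Wx Wh U b l (Suc k) $ 1 $ 1 \<le> A_s xmax Wx Wh U b l k $ 1 $ 1"
    unfolding A_s_entries by (rule sigbar_dec)
  show "A_s xmax Wx Wh U b l (Suc k) $ 1 $ 2 \<le> A_s xmax Wx Wh U b l k $ 1 $ 2"
    unfolding A_s_entries by (rule alpha_dec)
  show "A_s xmax Wx Wh U b l (Suc k) $ 2 $ 1 \<le> A_s xmax Wx Wh U b l k $ 2 $ 1"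
    unfolding A_s_entries using sigbar_dec sigbar_pos
    by (intro mult_mono) (auto intro: less_imp_le)
  show "A_s xmax Wx Wh U b l (Suc k) $ 2 $ 2 \<le> A_s xmax Wx Wh U b l k $ 2 $ 2"
    unfolding A_s_entries using sigbar_dec sigbar_pos alpha_dec alpha_nonneg cbar_dec cbar_nonneg opnorm2_nonneg
    by (intro add_mono mult_mono mult_right_mono) (auto intro: less_imp_le)
qed

end


lemma z_bound:
  fixes W :: "real^'n^'c" and x :: "real^'n"
  assumes x: "\<And>j. \<bar>x $ j\<bar> \<le> xm" and h: "\<And>j. \<bar>h $ j\<bar> \<le> e"
  shows "(W *v x + U *v h + bb) $ i \<le> vinf (vpos (xm *\<^sub>R rowabs W + e *\<^sub>R rowabs U + bb))"
    and "\<bar>(W *v x + U *v h + bb) $ i\<bar> \<le> vinf (xm *\<^sub>R rowabs W + e *\<^sub>R rowabs U + vabs bb)"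
proof -
  have a: "\<bar>(W *v x) $ i\<bar> \<le> xm * rowabs W $ i" by (rule mv_comp_bound[OF x])
  have c: "\<bar>(U *v h) $ i\<bar> \<le> e * rowabs U $ i" by (rule mv_comp_bound[OF h])
  have "(W *v x + U *v h + bb) $ i \<le> (vpos (xm *\<^sub>R rowabs W + e *\<^sub>R rowabs U + bb)) $ i"
    using a c by (simp add: vpos_def)
  also have "\<dots> \<le> vinf (vpos (xm *\<^sub>R rowabs W + e *\<^sub>R rowabs U + bb))"
    using vinf_ge by (rule order_trans[OF abs_ge_self])
  finally show "(W *v x + U *v h + bb) $ i \<le> vinf (vpos (xm *\<^sub>R rowabs W + e *\<^sub>R rowabs U + bb))" .
  have "\<bar>(W *v x + U *v h + bb) $ i\<bar> \<le> (xm *\<^sub>R rowabs W + e *\<^sub>R rowabs U + vabs bb) $ i"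
    using a c by (simp add: vabs_def)
  also have "\<dots> \<le> vinf (xm *\<^sub>R rowabs W + e *\<^sub>R rowabs U + vabs bb)"
    using vinf_ge by (rule order_trans[OF abs_ge_self])
  finally show "\<bar>(W *v x + U *v h + bb) $ i\<bar> \<le> vinf (xm *\<^sub>R rowabs W + e *\<^sub>R rowabs U + vabs bb)" .
qed

lemma cell_inv:
  fixes z :: "gate \<Rightarrow> real^'c" and c h :: "real^'c"
  assumes zub: "\<And>g i. g \<noteq> GC \<Longrightarrow> z g $ i \<le> Gg g"
    and zc: "\<And>i. \<bar>z GC $ i\<bar> \<le> Gg GC"
    and cb: "cb = sigm (Gg GI) * tanh (Gg GC) / (1 - sigm (Gg GF))"
    and c: "vinf c \<le> cb"
  defines "c' \<equiv> hadamard (vsig (z GF)) c + hadamard (vsig (z GI)) (vtanh (z GC))"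
  shows "vinf c' \<le> cb" "vinf (hadamard (vsig (z GO)) (vtanh c')) \<le> tanh cb * sigm (Gg GO)"
proof -
  have sf1: "1 - sigm (Gg GF) > 0" using sigm_lt1 by simp
  have cbeq: "sigm (Gg GI) * tanh (Gg GC) = cb * (1 - sigm (Gg GF))"
    using cb sf1 by simp
  have ci: "\<bar>c $ i\<bar> \<le> cb" for i using vinf_ge c order_trans by blast
  have cb0: "0 \<le> cb" using ci[of undefined] by linarith
  have "\<bar>c' $ i\<bar> \<le> cb" for i
  proof -
    have "\<bar>c' $ i\<bar> \<le> sigm (z GF $ i) * \<bar>c $ i\<bar> + sigm (z GI $ i) * \<bar>tanh (z GC $ i)\<bar>"
    proof -
      have "\<bar>c' $ i\<bar> = \<bar>sigm (z GF $ i) * c $ i + sigm (z GI $ i) * tanh (z GC $ i)\<bar>"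
        by (simp add: c'_def hadamard_def vsig_def vtanh_def)
      also have "\<dots> \<le> \<bar>sigm (z GF $ i) * c $ i\<bar> + \<bar>sigm (z GI $ i) * tanh (z GC $ i)\<bar>"
        by (rule abs_triangle_ineq)
      also have "\<dots> = sigm (z GF $ i) * \<bar>c $ i\<bar> + sigm (z GI $ i) * \<bar>tanh (z GC $ i)\<bar>"
        using sigm_pos[of "z GF $ i"] sigm_pos[of "z GI $ i"] by (simp add: abs_mult)
      finally show ?thesis .
    qed
    also have "\<dots> \<le> sigm (Gg GF) * cb + sigm (Gg GI) * tanh (Gg GC)"
    proof (intro add_mono mult_mono)
      show "sigm (z GF $ i) \<le> sigm (Gg GF)" by (rule sigm_mono) (simp add: zub)
      show "sigm (z GI $ i) \<le> sigm (Gg GI)" by (rule sigm_mono) (simp add: zub)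
      show "\<bar>tanh (z GC $ i)\<bar> \<le> tanh (Gg GC)" using zc[of i] by (simp flip: tanh_real_abs)
      show "0 \<le> \<bar>c $ i\<bar>" by simp
      show "0 \<le> sigm (Gg GF)" using sigm_pos less_imp_le by blast
      show "0 \<le> \<bar>tanh (z GC $ i)\<bar>" by simp
      show "0 \<le> sigm (Gg GI)" using sigm_pos less_imp_le by blast
      show "\<bar>c $ i\<bar> \<le> cb" by (rule ci)
    qed
    also have "\<dots> = cb" using cbeq by (simp add: algebra_simps)
    finally show ?thesis .
  qed
  then show c'b: "vinf c' \<le> cb" by (rule vinf_le)
  show "vinf (hadamard (vsig (z GO)) (vtanh c')) \<le> tanh cb * sigm (Gg GO)"
  proof (rule vinf_le)
    fix i
    have "\<bar>hadamard (vsig (z GO)) (vtanh c') $ i\<bar> = sigm (z GO $ i) * \<bar>tanh (c' $ i)\<bar>"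
      using sigm_pos[of "z GO $ i"] by (simp add: hadamard_def vsig_def vtanh_def abs_mult)
    also have "\<dots> \<le> sigm (Gg GO) * tanh cb"
    proof (intro mult_mono)
      show "sigm (z GO $ i) \<le> sigm (Gg GO)" by (rule sigm_mono) (simp add: zub)
      show "\<bar>tanh (c' $ i)\<bar> \<le> tanh cb" using \<open>\<bar>c' $ i\<bar> \<le> cb\<close> by (simp flip: tanh_real_abs)
      show "0 \<le> \<bar>tanh (c' $ i)\<bar>" by simp
      show "0 \<le> sigm (Gg GO)" using sigm_pos less_imp_le by blast
    qed
    finally show "\<bar>hadamard (vsig (z GO)) (vtanh c') $ i\<bar> \<le> tanh cb * sigm (Gg GO)"
      by (simp add: mult.commute)
  qed
qed



lemma zdiff:
  fixes W :: "real^'n^'c" and U :: "real^'c^'c"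
  shows "norm ((W *v x1 + U *v h1 + bb) - (W *v x2 + U *v h2 + bb))
         \<le> opnorm2 W * norm (x1 - x2) + opnorm2 U * norm (h1 - h2)"
proof -
  have "(W *v x1 + U *v h1 + bb) - (W *v x2 + U *v h2 + bb) = W *v (x1 - x2) + U *v (h1 - h2)"
    by (simp add: algebra_simps)
  then show ?thesis
    using norm_triangle_ineq[of "W *v (x1 - x2)" "U *v (h1 - h2)"] opnorm2_bound[of W] opnorm2_bound[of U]
    by (smt (verit))
qed

lemma had_comm: "hadamard u v = hadamard v u"
  by (simp add: hadamard_def mult.commute)

lemma vinf_abs_le: "vinf v \<le> M \<Longrightarrow> \<bar>v $ i\<bar> \<le> M"
  using vinf_ge order_trans by blast

lemma cell_diff:
  fixes W :: "gate \<Rightarrow> real^'n^'c" and U :: "gate \<Rightarrow> real^'c^'c" and bb :: "gate \<Rightarrow> real^'c"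
    and x1 x2 :: "real^'n" and c1 c2 h1 h2 :: "real^'c"
  defines "z1 \<equiv> \<lambda>g. W g *v x1 + U g *v h1 + bb g"
    and "z2 \<equiv> \<lambda>g. W g *v x2 + U g *v h2 + bb g"
  assumes zub1: "\<And>g i. g \<noteq> GC \<Longrightarrow> z1 g $ i \<le> Gg g"
    and zub2: "\<And>g i. g \<noteq> GC \<Longrightarrow> z2 g $ i \<le> Gg g"
    and zc2: "\<And>i. \<bar>z2 GC $ i\<bar> \<le> Gg GC"
    and cb: "cb = sigm (Gg GI) * tanh (Gg GC) / (1 - sigm (Gg GF))"
    and c2: "vinf c2 \<le> cb"
  defines "c1' \<equiv> hadamard (vsig (z1 GF)) c1 + hadamard (vsig (z1 GI)) (vtanh (z1 GC))"
    and "c2' \<equiv> hadamard (vsig (z2 GF)) c2 + hadamard (vsig (z2 GI)) (vtanh (z2 GC))"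
  shows "norm (c1' - c2') \<le> sigm (Gg GF) * norm (c1 - c2)
           + (1/4 * opnorm2 (U GF) * cb + sigm (Gg GI) * opnorm2 (U GC) + 1/4 * opnorm2 (U GI) * tanh (Gg GC)) * norm (h1 - h2)
           + (1/4 * opnorm2 (W GF) * cb + sigm (Gg GI) * opnorm2 (W GC) + 1/4 * opnorm2 (W GI) * tanh (Gg GC)) * norm (x1 - x2)"
    and "norm (hadamard (vsig (z1 GO)) (vtanh c1') - hadamard (vsig (z2 GO)) (vtanh c2'))
         \<le> sigm (Gg GO) * norm (c1' - c2') + 1/4 * tanh cb * opnorm2 (U GO) * norm (h1 - h2)
           + 1/4 * tanh cb * opnorm2 (W GO) * norm (x1 - x2)"
proof -
  define dx where "dx = norm (x1 - x2)"
  define dh where "dh = norm (h1 - h2)"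
  have dx0: "0 \<le> dx" and dh0: "0 \<le> dh" by (simp_all add: dx_def dh_def)
  have zd: "norm (z1 g - z2 g) \<le> opnorm2 (W g) * dx + opnorm2 (U g) * dh" for g
    unfolding z1_def z2_def dx_def dh_def by (rule zdiff)
  have c2'b: "vinf c2' \<le> cb"
    unfolding c2'_def using cell_inv(1)[of z2 Gg cb c2, OF zub2 zc2 cb c2] by simp
  have cb0: "0 \<le> cb" using c2 vinf_nonneg order_trans by blast
  have phi0: "0 \<le> tanh (Gg GC)" using zc2[of undefined] by simp
  have sig_le: "\<bar>vsig (z1 g) $ i\<bar> \<le> sigm (Gg g)" if "g \<noteq> GC" for g i
    using sigm_pos[of "z1 g $ i"] sigm_mono[OF zub1[OF that]] by (simp add: vsig_def)
  have phi_le: "\<bar>vtanh (z2 GC) $ i\<bar> \<le> tanh (Gg GC)" for i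
    using zc2[of i] by (simp add: vtanh_def flip: tanh_real_abs)
  have sdiff: "norm (vsig (z1 g) - vsig (z2 g)) \<le> 1/4 * (opnorm2 (W g) * dx + opnorm2 (U g) * dh)" for g
    by (rule order_trans[OF norm_vsig_lip]) (simp add: zd)
  have tdiff: "norm (vtanh (z1 g) - vtanh (z2 g)) \<le> opnorm2 (W g) * dx + opnorm2 (U g) * dh" for g
    using norm_vtanh_lip[of "z1 g" "z2 g"] zd[of g] by linarith
  have deq: "c1' - c2' = hadamard (vsig (z1 GF)) (c1 - c2) + hadamard c2 (vsig (z1 GF) - vsig (z2 GF))
       + hadamard (vsig (z1 GI)) (vtanh (z1 GC) - vtanh (z2 GC))
       + hadamard (vtanh (z2 GC)) (vsig (z1 GI) - vsig (z2 GI))"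
    unfolding c1'_def c2'_def by (simp add: vec_eq_iff hadamard_def algebra_simps)
  have t1: "norm (hadamard (vsig (z1 GF)) (c1 - c2)) \<le> sigm (Gg GF) * norm (c1 - c2)"
    by (rule norm_hadamard_le) (simp add: sig_le)
  have t2: "norm (hadamard c2 (vsig (z1 GF) - vsig (z2 GF))) \<le> cb * (1/4 * (opnorm2 (W GF) * dx + opnorm2 (U GF) * dh))"
    by (rule order_trans[OF norm_hadamard_le[OF vinf_abs_le[OF c2]]])
       (rule mult_left_mono[OF sdiff cb0])
  have t3: "norm (hadamard (vsig (z1 GI)) (vtanh (z1 GC) - vtanh (z2 GC))) \<le> sigm (Gg GI) * (opnorm2 (W GC) * dx + opnorm2 (U GC) * dh)"
    by (rule order_trans[OF norm_hadamard_le[OF sig_le]])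
       (auto intro!: mult_left_mono tdiff less_imp_le[OF sigm_pos])
  have t4: "norm (hadamard (vtanh (z2 GC)) (vsig (z1 GI) - vsig (z2 GI))) \<le> tanh (Gg GC) * (1/4 * (opnorm2 (W GI) * dx + opnorm2 (U GI) * dh))"
    by (rule order_trans[OF norm_hadamard_le[OF phi_le]])
       (rule mult_left_mono[OF sdiff phi0])
  have "norm (c1' - c2') \<le> sigm (Gg GF) * norm (c1 - c2)
      + cb * (1/4 * (opnorm2 (W GF) * dx + opnorm2 (U GF) * dh))
      + sigm (Gg GI) * (opnorm2 (W GC) * dx + opnorm2 (U GC) * dh)
      + tanh (Gg GC) * (1/4 * (opnorm2 (W GI) * dx + opnorm2 (U GI) * dh))"
    unfolding deq using t1 t2 t3 t4 norm_triangle_ineq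
    by (smt (verit))
  then show "norm (c1' - c2') \<le> sigm (Gg GF) * norm (c1 - c2)
           + (1/4 * opnorm2 (U GF) * cb + sigm (Gg GI) * opnorm2 (U GC) + 1/4 * opnorm2 (U GI) * tanh (Gg GC)) * norm (h1 - h2)
           + (1/4 * opnorm2 (W GF) * cb + sigm (Gg GI) * opnorm2 (W GC) + 1/4 * opnorm2 (W GI) * tanh (Gg GC)) * norm (x1 - x2)"
    unfolding dx_def[symmetric] dh_def[symmetric] by (simp add: algebra_simps)
  have heq: "hadamard (vsig (z1 GO)) (vtanh c1') - hadamard (vsig (z2 GO)) (vtanh c2')
     = hadamard (vsig (z1 GO)) (vtanh c1' - vtanh c2') + hadamard (vtanh c2') (vsig (z1 GO) - vsig (z2 GO))"
    by (simp add: vec_eq_iff hadamard_def algebra_simps)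
  have tc2: "\<bar>vtanh c2' $ i\<bar> \<le> tanh cb" for i
    using vinf_abs_le[OF c2'b, of i] by (simp add: vtanh_def flip: tanh_real_abs)
  have tcb0: "0 \<le> tanh cb" using cb0 by simp
  have u1: "norm (hadamard (vsig (z1 GO)) (vtanh c1' - vtanh c2')) \<le> sigm (Gg GO) * norm (c1' - c2')"
    by (rule order_trans[OF norm_hadamard_le[OF sig_le]])
       (auto intro!: mult_left_mono norm_vtanh_lip less_imp_le[OF sigm_pos])
  have u2: "norm (hadamard (vtanh c2') (vsig (z1 GO) - vsig (z2 GO))) \<le> tanh cb * (1/4 * (opnorm2 (W GO) * dx + opnorm2 (U GO) * dh))"
    by (rule order_trans[OF norm_hadamard_le[OF tc2]])
       (rule mult_left_mono[OF sdiff tcb0])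
  have "norm (hadamard (vsig (z1 GO)) (vtanh c1') - hadamard (vsig (z2 GO)) (vtanh c2'))
      \<le> sigm (Gg GO) * norm (c1' - c2') + tanh cb * (1/4 * (opnorm2 (W GO) * dx + opnorm2 (U GO) * dh))"
    unfolding heq using u1 u2 norm_triangle_ineq by (smt (verit))
  then show "norm (hadamard (vsig (z1 GO)) (vtanh c1') - hadamard (vsig (z2 GO)) (vtanh c2'))
         \<le> sigm (Gg GO) * norm (c1' - c2') + 1/4 * tanh cb * opnorm2 (U GO) * norm (h1 - h2)
           + 1/4 * tanh cb * opnorm2 (W GO) * norm (x1 - x2)"
    unfolding dx_def[symmetric] dh_def[symmetric] by (simp add: algebra_simps)
qed



context
  fixes xmax :: real and Wx :: "gate \<Rightarrow> real^'x^'c" and Wh :: "nat \<Rightarrow> gate \<Rightarrow> real^'c^'c"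
    and U :: "nat \<Rightarrow> gate \<Rightarrow> real^'c^'c" and b :: "nat \<Rightarrow> gate \<Rightarrow> real^'c"
  assumes xmax_nn: "xmax \<ge> 0"
begin

definition "HGprop l (W :: gate \<Rightarrow> real^'n^'c) xm \<longleftrightarrow> (\<forall>g e. Gfun xmax Wx Wh U b l g e =
   (if g = GC then vinf (xm *\<^sub>R rowabs (W g) + e *\<^sub>R rowabs (U l g) + vabs (b l g))
    else vinf (vpos (xm *\<^sub>R rowabs (W g) + e *\<^sub>R rowabs (U l g) + b l g))))"

lemma HG1: "HGprop 1 Wx xmax"
  unfolding HGprop_def Gfun_def Let_def by simp

lemma HG2: "l \<noteq> 1 \<Longrightarrow> HGprop l (Wh l) 1"
  unfolding HGprop_def Gfun_def Let_def by simp

lemma Sset_iff: "(c, h) \<in> Sset xmax Wx Wh U b l k \<longleftrightarrow>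
   vinf c \<le> cbar xmax Wx Wh U b l k \<and> vinf h \<le> eta xmax Wx Wh U b l k"
  by (simp add: Sset_def eta_def)

lemma Sset_h: "s \<in> Sset xmax Wx Wh U b l k \<Longrightarrow> \<bar>snd s $ j\<bar> \<le> eta_prev xmax Wx Wh U b l k"
  using vinf_abs_le[of "snd s" "eta xmax Wx Wh U b l k" j] EE_dec[OF xmax_nn, of Wx Wh U b l k]
  by (cases s) (auto simp: Sset_iff eta_eq[OF xmax_nn])

lemma Sset_h1: "s \<in> Sset xmax Wx Wh U b l k \<Longrightarrow> \<bar>snd s $ j\<bar> \<le> 1"
  using Sset_h EE_bounds(2)[OF xmax_nn] order_trans by blast

lemma Sset_c: "s \<in> Sset xmax Wx Wh U b l k \<Longrightarrow> vinf (fst s) \<le> cbar xmax Wx Wh U b l k"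
  by (cases s) (auto simp: Sset_iff)

lemma gate_bounds:
  fixes W :: "gate \<Rightarrow> real^'n^'c" and x :: "real^'n"
  assumes HG: "HGprop l W xm" and x: "\<And>j. \<bar>x $ j\<bar> \<le> xm"
    and h: "\<And>j. \<bar>h $ j\<bar> \<le> eta_prev xmax Wx Wh U b l k"
  shows "\<And>g i. g \<noteq> GC \<Longrightarrow> (W g *v x + U l g *v h + b l g) $ i \<le> Gfun xmax Wx Wh U b l g (eta_prev xmax Wx Wh U b l k)"
    and "\<And>i. \<bar>(W GC *v x + U l GC *v h + b l GC) $ i\<bar> \<le> Gfun xmax Wx Wh U b l GC (eta_prev xmax Wx Wh U b l k)"
  using z_bound[OF x h] HG unfolding HGprop_def by auto

lemma cbar_formula: "cbar xmax Wx Wh U b l k =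
   sigm (Gfun xmax Wx Wh U b l GI (eta_prev xmax Wx Wh U b l k)) * tanh (Gfun xmax Wx Wh U b l GC (eta_prev xmax Wx Wh U b l k))
   / (1 - sigm (Gfun xmax Wx Wh U b l GF (eta_prev xmax Wx Wh U b l k)))"
  by (simp add: cbar_def sigbar_def phibar_def)

lemma layer_inv:
  fixes W :: "gate \<Rightarrow> real^'n^'c" and x :: "real^'n"
  assumes HG: "HGprop l W xm" and x: "\<And>j. \<bar>x $ j\<bar> \<le> xm"
    and s: "s \<in> Sset xmax Wx Wh U b l k"
  shows "cell_step (\<lambda>g. W g *v x) (U l) (b l) s \<in> Sset xmax Wx Wh U b l k"
proof -
  obtain c h where s_eq: "s = (c, h)" by (cases s)
  have h: "\<bar>h $ j\<bar> \<le> eta_prev xmax Wx Wh U b l k" for j using Sset_h[OF s] s_eq by simp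
  have c: "vinf c \<le> cbar xmax Wx Wh U b l k" using Sset_c[OF s] s_eq by simp
  note gb = gate_bounds[OF HG x h]
  note ci = cell_inv[of "\<lambda>g. W g *v x + U l g *v h + b l g" "\<lambda>g. Gfun xmax Wx Wh U b l g (eta_prev xmax Wx Wh U b l k)",
      OF gb(1) gb(2) cbar_formula c]
  show ?thesis
    unfolding s_eq cell_step_def Let_def Sset_iff
    using ci by (simp add: eta_def sigbar_def)
qed

lemma traj_inv:
  assumes s0: "\<forall>l\<in>{1..L}. s0 l \<in> Sset xmax Wx Wh U b l k"
    and x: "\<forall>\<tau><t. \<forall>i. \<bar>x \<tau> $ i\<bar> \<le> xmax"
  shows "\<forall>l\<in>{1..L}. lstm_traj Wx Wh U b x s0 t l \<in> Sset xmax Wx Wh U b l k"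
  using x
proof (induction t)
  case 0
  then show ?case using s0 by simp
next
  case (Suc t)
  then have IH: "\<forall>l\<in>{1..L}. lstm_traj Wx Wh U b x s0 t l \<in> Sset xmax Wx Wh U b l k"
    by simp
  have xt: "\<bar>x t $ i\<bar> \<le> xmax" for i using Suc.prems by simp
  have "1 \<le> l \<longrightarrow> l \<le> L \<longrightarrow> lstm_traj Wx Wh U b x s0 (Suc t) l \<in> Sset xmax Wx Wh U b l k" for l
  proof (induction l)
    case 0 then show ?case by simp
  next
    case (Suc l)
    show ?case
    proof (cases l)
      case 0
      show ?thesis
      proof (intro impI)
        assume "Suc l \<le> L"
        then have "lstm_traj Wx Wh U b x s0 t 1 \<in> Sset xmax Wx Wh U b 1 k" using IH 0 by simp
        then show "lstm_traj Wx Wh U b x s0 (Suc t) (Suc l) \<in> Sset xmax Wx Wh U b (Suc l) k"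
          using layer_inv[OF HG1 xt] 0 by simp
      qed
    next
      case (Suc m)
      show ?thesis
      proof (intro impI)
        assume L: "Suc l \<le> L"
        have prev: "lstm_traj Wx Wh U b x s0 (Suc t) (Suc m) \<in> Sset xmax Wx Wh U b (Suc m) k"
          using \<open>1 \<le> l \<longrightarrow> l \<le> L \<longrightarrow> _\<close> Suc L by simp
        have cur: "lstm_traj Wx Wh U b x s0 t (Suc (Suc m)) \<in> Sset xmax Wx Wh U b (Suc (Suc m)) k"
          using IH Suc L by simp
        show "lstm_traj Wx Wh U b x s0 (Suc t) (Suc l) \<in> Sset xmax Wx Wh U b (Suc l) k"
          using layer_inv[OF HG2[of "Suc (Suc m)"] Sset_h1[OF prev] cur] Suc by simp
      qed
    qed
  qed
  then show ?case by auto
qed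

definition "kc l (W :: gate \<Rightarrow> real^'n^'c) k = 1/4 * opnorm2 (W GF) * cbar xmax Wx Wh U b l k
   + sigbar xmax Wx Wh U b l GI k * opnorm2 (W GC) + 1/4 * opnorm2 (W GI) * phibar xmax Wx Wh U b l k"

definition "kh l (W :: gate \<Rightarrow> real^'n^'c) k = sigbar xmax Wx Wh U b l GO k * kc l W k
   + 1/4 * tanh (cbar xmax Wx Wh U b l k) * opnorm2 (W GO)"

lemma layer_diff:
  fixes W :: "gate \<Rightarrow> real^'n^'c" and x1 x2 :: "real^'n"
  assumes HG: "HGprop l W xm" and x1: "\<And>j. \<bar>x1 $ j\<bar> \<le> xm" and x2: "\<And>j. \<bar>x2 $ j\<bar> \<le> xm"
    and s1: "s1 \<in> Sset xmax Wx Wh U b l k" and s2: "s2 \<in> Sset xmax Wx Wh U b l k"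
  defines "s1' \<equiv> cell_step (\<lambda>g. W g *v x1) (U l) (b l) s1"
    and "s2' \<equiv> cell_step (\<lambda>g. W g *v x2) (U l) (b l) s2"
  defines "A \<equiv> A_s xmax Wx Wh U b l k"
  shows "norm (fst s1' - fst s2') \<le> A$1$1 * norm (fst s1 - fst s2) + A$1$2 * norm (snd s1 - snd s2)
            + kc l W k * norm (x1 - x2)"
    and "norm (snd s1' - snd s2') \<le> A$2$1 * norm (fst s1 - fst s2) + A$2$2 * norm (snd s1 - snd s2)
            + kh l W k * norm (x1 - x2)"
proof -
  obtain c1 h1 where e1: "s1 = (c1, h1)" by (cases s1)
  obtain c2 h2 where e2: "s2 = (c2, h2)" by (cases s2)
  have h1: "\<bar>h1 $ j\<bar> \<le> eta_prev xmax Wx Wh U b l k" for j using Sset_h[OF s1] e1 by simp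
  have h2: "\<bar>h2 $ j\<bar> \<le> eta_prev xmax Wx Wh U b l k" for j using Sset_h[OF s2] e2 by simp
  have c2: "vinf c2 \<le> cbar xmax Wx Wh U b l k" using Sset_c[OF s2] e2 by simp
  note gb1 = gate_bounds[OF HG x1 h1]
  note gb2 = gate_bounds[OF HG x2 h2]
  note cd = cell_diff[of W x1 "U l" h1 "b l" "\<lambda>g. Gfun xmax Wx Wh U b l g (eta_prev xmax Wx Wh U b l k)" x2 h2,
     OF gb1(1) gb2(1) gb2(2) cbar_formula c2, of c1]
  have so0: "0 \<le> sigbar xmax Wx Wh U b l GO k" using sigbar_pos[OF xmax_nn] less_imp_le by blast
  have E: "A$1$1 = sigbar xmax Wx Wh U b l GF k" "A$1$2 = alpha_s xmax Wx Wh U b l k"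
    "A$2$1 = sigbar xmax Wx Wh U b l GO k * sigbar xmax Wx Wh U b l GF k"
    "A$2$2 = alpha_s xmax Wx Wh U b l k * sigbar xmax Wx Wh U b l GO k
      + 1/4 * tanh (cbar xmax Wx Wh U b l k) * opnorm2 (U l GO)"
    unfolding A_def using A_s_entries[OF xmax_nn] by simp_all
  have r1: "norm (fst s1' - fst s2') \<le> A$1$1 * norm (fst s1 - fst s2) + A$1$2 * norm (snd s1 - snd s2)
            + kc l W k * norm (x1 - x2)"
    using cd(1) unfolding s1'_def s2'_def e1 e2 cell_step_def Let_def E kc_def
    by (simp add: sigbar_def phibar_def alpha_s_def)
  then show "norm (fst s1' - fst s2') \<le> A$1$1 * norm (fst s1 - fst s2) + A$1$2 * norm (snd s1 - snd s2)
            + kc l W k * norm (x1 - x2)" .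
  have r2: "norm (snd s1' - snd s2') \<le> sigbar xmax Wx Wh U b l GO k * norm (fst s1' - fst s2')
       + 1/4 * tanh (cbar xmax Wx Wh U b l k) * opnorm2 (U l GO) * norm (snd s1 - snd s2)
       + 1/4 * tanh (cbar xmax Wx Wh U b l k) * opnorm2 (W GO) * norm (x1 - x2)"
    using cd(2) unfolding s1'_def s2'_def e1 e2 cell_step_def Let_def
    by (simp add: sigbar_def)
  have "sigbar xmax Wx Wh U b l GO k * norm (fst s1' - fst s2') \<le> sigbar xmax Wx Wh U b l GO k *
     (A$1$1 * norm (fst s1 - fst s2) + A$1$2 * norm (snd s1 - snd s2) + kc l W k * norm (x1 - x2))"
    by (rule mult_left_mono[OF r1 so0])
  with r2 show "norm (snd s1' - snd s2') \<le> A$2$1 * norm (fst s1 - fst s2) + A$2$2 * norm (snd s1 - snd s2)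
            + kh l W k * norm (x1 - x2)"
    unfolding E kh_def by (simp add: algebra_simps)
qed

end


lemma lyap2:
  fixes a bb c d kc kh x y x' y' u :: real
  assumes nn: "0 \<le> a" "0 \<le> bb" "0 \<le> c" "0 \<le> d" and a1: "a < 1" and d1: "d < 1"
    and det: "bb * c < (1 - a) * (1 - d)" and xy: "0 \<le> x" "0 \<le> y" "0 \<le> u"
    and h1: "x' \<le> a * x + bb * y + kc * u" and h2: "y' \<le> c * x + d * y + kh * u"
  shows "(1 - d + c) * x' + (1 - a + bb) * y'
     \<le> (1 - ((1 - a) * (1 - d) - bb * c) / max (1 - d + c) (1 - a + bb)) * ((1 - d + c) * x + (1 - a + bb) * y)
       + ((1 - d + c) * kc + (1 - a + bb) * kh) * u"
proof -
  define p1 where "p1 = 1 - d + c"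
  define p2 where "p2 = 1 - a + bb"
  define D where "D = (1 - a) * (1 - d) - bb * c"
  define P where "P = max p1 p2"
  have p1: "0 < p1" and p2: "0 < p2" using nn a1 d1 by (auto simp: p1_def p2_def)
  have D: "0 < D" using det by (simp add: D_def)
  have P: "0 < P" "p1 \<le> P" "p2 \<le> P" using p1 by (auto simp: P_def)
  have "p1 * x' + p2 * y' \<le> p1 * (a * x + bb * y + kc * u) + p2 * (c * x + d * y + kh * u)"
    using h1 h2 p1 p2 by (intro add_mono mult_left_mono) auto
  also have "\<dots> = (p1 - D) * x + (p2 - D) * y + (p1 * kc + p2 * kh) * u"
    by (simp add: p1_def p2_def D_def algebra_simps)
  also have "\<dots> \<le> (1 - D / P) * (p1 * x + p2 * y) + (p1 * kc + p2 * kh) * u"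
  proof -
    have "D / P * p1 \<le> D" using P D by (simp add: field_simps mult_left_mono)
    then have "(p1 - D) * x \<le> (1 - D / P) * p1 * x" using xy by (intro mult_right_mono) (auto simp: algebra_simps)
    moreover have "D / P * p2 \<le> D" using P D by (simp add: field_simps mult_left_mono)
    then have "(p2 - D) * y \<le> (1 - D / P) * p2 * y" using xy by (intro mult_right_mono) (auto simp: algebra_simps)
    ultimately show ?thesis by (simp add: algebra_simps)
  qed
  finally show ?thesis by (simp add: p1_def p2_def D_def P_def)
qed

lemma cascade:
  fixes v u :: "nat \<Rightarrow> real"
  assumes v1: "1 \<le> L \<Longrightarrow> v 1 \<le> lam * u 1 + K * d"
    and vl: "\<And>l. 2 \<le> l \<Longrightarrow> l \<le> L \<Longrightarrow> v l \<le> lam * u l + K * v (l - 1)"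
    and e: "0 < e" and K: "0 \<le> K" and d: "0 \<le> d"
  shows "n \<le> L \<Longrightarrow> (\<Sum>l=1..n. e^l * v l) \<le> lam * (\<Sum>l=1..n. e^l * u l) + K * e * d
            + K * e * (\<Sum>l=1..n-1. e^l * v l)"
proof (induction n)
  case 0 then show ?case using K e d by simp
next
  case (Suc n)
  show ?case
  proof (cases n)
    case 0
    have "e * v 1 \<le> e * (lam * u 1 + K * d)" using v1 Suc.prems 0 e by (intro mult_left_mono) auto
    then show ?thesis using 0 by (simp add: algebra_simps)
  next
    case (Suc m)
    have IH: "(\<Sum>l=1..n. e^l * v l) \<le> lam * (\<Sum>l=1..n. e^l * u l) + K * e * d + K * e * (\<Sum>l=1..n-1. e^l * v l)"
      using Suc.IH Suc.prems by simp
    have step: "e^(Suc n) * v (Suc n) \<le> e^(Suc n) * (lam * u (Suc n) + K * v n)"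
      using vl[of "Suc n"] Suc.prems Suc e by (intro mult_left_mono) auto
    have s1: "(\<Sum>l=1..Suc n. e^l * v l) = (\<Sum>l=1..n. e^l * v l) + e^(Suc n) * v (Suc n)" by simp
    have s2: "(\<Sum>l=1..Suc n. e^l * u l) = (\<Sum>l=1..n. e^l * u l) + e^(Suc n) * u (Suc n)" by simp
    have s3: "(\<Sum>l=1..n. e^l * v l) = (\<Sum>l=1..n-1. e^l * v l) + e^n * v n"
      using Suc by simp
    have "(\<Sum>l=1..Suc n. e^l * v l) = (\<Sum>l=1..n. e^l * v l) + e^(Suc n) * v (Suc n)" by (rule s1)
    also have "\<dots> \<le> (lam * (\<Sum>l=1..n. e^l * u l) + K * e * d + K * e * (\<Sum>l=1..n-1. e^l * v l))
        + e^(Suc n) * (lam * u (Suc n) + K * v n)" using IH step by (rule add_mono)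
    also have "\<dots> = lam * ((\<Sum>l=1..n. e^l * u l) + e^(Suc n) * u (Suc n)) + K * e * d
        + K * e * ((\<Sum>l=1..n-1. e^l * v l) + e^n * v n)" by (simp add: algebra_simps)
    also have "\<dots> = lam * (\<Sum>l=1..Suc n. e^l * u l) + K * e * d + K * e * (\<Sum>l=1..Suc n - 1. e^l * v l)"
      unfolding s2 s3[symmetric] by simp
    finally show ?thesis .
  qed
qed

lemma unroll:
  fixes W d :: "nat \<Rightarrow> real"
  assumes rec: "\<And>s. s < t \<Longrightarrow> W (Suc s) \<le> mu * W s + Q * d s"
    and dM: "\<And>s. s < t \<Longrightarrow> d s \<le> M"
    and mu: "0 \<le> mu" "mu < 1" and Q: "0 \<le> Q" and M: "0 \<le> M"
  shows "W t \<le> mu^t * W 0 + Q / (1 - mu) * M"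
  using rec dM
proof (induction t)
  case 0 then show ?case using Q M mu by simp
next
  case (Suc t)
  have IH: "W t \<le> mu^t * W 0 + Q / (1 - mu) * M" using Suc by simp
  have "W (Suc t) \<le> mu * W t + Q * d t" using Suc.prems by simp
  also have "\<dots> \<le> mu * (mu^t * W 0 + Q / (1 - mu) * M) + Q * M"
    using IH Suc.prems(2)[of t] mu Q by (intro add_mono mult_left_mono) auto
  also have "\<dots> = mu^(Suc t) * W 0 + Q / (1 - mu) * M"
    using mu by (simp add: field_simps)
  finally show ?case .
qed

lemma KL_lin:
  assumes C: "0 < C" and mu: "0 < mu" "mu < 1"
  shows "class_KL (\<lambda>s t. C * mu^t * s)"
proof -
  have a: "continuous_on {0..} (\<lambda>s. C * mu ^ t * s)" for t by (intro continuous_intros)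
  have b: "strict_mono_on {0..} (\<lambda>s. C * mu ^ t * s)" for t
    using C mu by (intro strict_mono_onI) simp
  have c: "\<forall>s\<ge>0. 0 \<le> C * mu ^ t * s" for t using C mu by simp
  have d: "antimono (\<lambda>t. C * mu ^ t * s)" if s: "0 \<le> s" for s
    using C mu s by (intro antimonoI mult_right_mono mult_left_mono power_decreasing) auto
  have e: "(\<lambda>t. C * mu ^ t * s) \<longlonglongrightarrow> 0" for s
  proof -
    have "(\<lambda>t. C * mu ^ t * s) \<longlonglongrightarrow> C * 0 * s"
      using mu by (intro tendsto_intros LIMSEQ_power_zero) auto
    then show ?thesis by simp
  qed
  show ?thesis unfolding class_KL_def class_K_def using a b c d e by simp
qed

lemma Kinf_lin:
  assumes D: "0 < D"
  shows "class_Kinf (\<lambda>r. D * r)"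
proof -
  have a: "continuous_on {0..} (\<lambda>r. D * r)" by (intro continuous_intros)
  have b: "strict_mono_on {0..} (\<lambda>r. D * r)" using D by (intro strict_mono_onI) simp
  have c: "\<exists>s\<ge>0. M < D * s" for M
    using D by (intro exI[of _ "(\<bar>M\<bar> + 1) / D"]) auto
  show ?thesis unfolding class_Kinf_def class_K_def using a b c D by simp
qed

lemma sd_le_sum:
  "state_dist L s1 s2 \<le> (\<Sum>l=1..L. norm (fst (s1 l) - fst (s2 l)) + norm (snd (s1 l) - snd (s2 l)))"
proof -
  have "state_dist L s1 s2 = L2_set (\<lambda>l. norm (s1 l - s2 l)) {1..L}"
    by (simp add: state_dist_def L2_set_def)
  also have "\<dots> \<le> (\<Sum>l=1..L. norm (s1 l - s2 l))" by (rule L2_set_le_sum) simp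
  also have "\<dots> \<le> (\<Sum>l=1..L. norm (fst (s1 l) - fst (s2 l)) + norm (snd (s1 l) - snd (s2 l)))"
  proof (rule sum_mono)
    fix l
    have "s1 l - s2 l = (fst (s1 l) - fst (s2 l), snd (s1 l) - snd (s2 l))" by (simp add: prod_eq_iff)
    then show "norm (s1 l - s2 l) \<le> norm (fst (s1 l) - fst (s2 l)) + norm (snd (s1 l) - snd (s2 l))"
      using norm_Pair_le by metis
  qed
  finally show ?thesis .
qed

lemma comp_le_sd:
  assumes "l \<in> {1..L}"
  shows "norm (fst (s1 l) - fst (s2 l)) \<le> state_dist L s1 s2"
    and "norm (snd (s1 l) - snd (s2 l)) \<le> state_dist L s1 s2"
proof -
  have eq: "s1 l - s2 l = (fst (s1 l) - fst (s2 l), snd (s1 l) - snd (s2 l))" by (simp add: prod_eq_iff)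
  have "norm (s1 l - s2 l) \<le> L2_set (\<lambda>l. norm (s1 l - s2 l)) {1..L}"
    using assms by (intro member_le_L2_set) auto
  also have "\<dots> = state_dist L s1 s2" by (simp add: state_dist_def L2_set_def)
  finally have *: "norm (s1 l - s2 l) \<le> state_dist L s1 s2" .
  show "norm (fst (s1 l) - fst (s2 l)) \<le> state_dist L s1 s2"
    using norm_fst_le[of "fst (s1 l) - fst (s2 l)" "snd (s1 l) - snd (s2 l)"] * eq by simp
  show "norm (snd (s1 l) - snd (s2 l)) \<le> state_dist L s1 s2"
    using norm_snd_le[of "snd (s1 l) - snd (s2 l)" "fst (s1 l) - fst (s2 l)"] * eq by simp
qed



context
  fixes xmax :: real and Wx :: "gate \<Rightarrow> real^'x^'c" and Wh :: "nat \<Rightarrow> gate \<Rightarrow> real^'c^'c"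
    and U :: "nat \<Rightarrow> gate \<Rightarrow> real^'c^'c" and b :: "nat \<Rightarrow> gate \<Rightarrow> real^'c"
  assumes xmax_nn: "xmax \<ge> 0"
begin

abbreviation "TR x s \<equiv> lstm_traj Wx Wh U b x s"

lemma traj_step1:
  assumes s1: "TR x1 s1 t 1 \<in> Sset xmax Wx Wh U b 1 k" and s2: "TR x2 s2 t 1 \<in> Sset xmax Wx Wh U b 1 k"
    and x1: "\<And>j. \<bar>x1 t $ j\<bar> \<le> xmax" and x2: "\<And>j. \<bar>x2 t $ j\<bar> \<le> xmax"
  defines "A \<equiv> A_s xmax Wx Wh U b 1 k"
  shows "norm (fst (TR x1 s1 (Suc t) 1) - fst (TR x2 s2 (Suc t) 1))
          \<le> A$1$1 * norm (fst (TR x1 s1 t 1) - fst (TR x2 s2 t 1)) + A$1$2 * norm (snd (TR x1 s1 t 1) - snd (TR x2 s2 t 1))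
            + kc xmax Wx Wh U b 1 Wx k * norm (x1 t - x2 t)"
    and "norm (snd (TR x1 s1 (Suc t) 1) - snd (TR x2 s2 (Suc t) 1))
          \<le> A$2$1 * norm (fst (TR x1 s1 t 1) - fst (TR x2 s2 t 1)) + A$2$2 * norm (snd (TR x1 s1 t 1) - snd (TR x2 s2 t 1))
            + kh xmax Wx Wh U b 1 Wx k * norm (x1 t - x2 t)"
  using layer_diff[OF xmax_nn HG1[OF xmax_nn] x1 x2 s1 s2] unfolding A_def by (simp_all add: One_nat_def)

lemma traj_stepl:
  assumes s1: "TR x1 s1 t (Suc (Suc m)) \<in> Sset xmax Wx Wh U b (Suc (Suc m)) k"
    and s2: "TR x2 s2 t (Suc (Suc m)) \<in> Sset xmax Wx Wh U b (Suc (Suc m)) k"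
    and p1: "TR x1 s1 (Suc t) (Suc m) \<in> Sset xmax Wx Wh U b (Suc m) k"
    and p2: "TR x2 s2 (Suc t) (Suc m) \<in> Sset xmax Wx Wh U b (Suc m) k"
  defines "A \<equiv> A_s xmax Wx Wh U b (Suc (Suc m)) k"
  shows "norm (fst (TR x1 s1 (Suc t) (Suc (Suc m))) - fst (TR x2 s2 (Suc t) (Suc (Suc m))))
          \<le> A$1$1 * norm (fst (TR x1 s1 t (Suc (Suc m))) - fst (TR x2 s2 t (Suc (Suc m))))
            + A$1$2 * norm (snd (TR x1 s1 t (Suc (Suc m))) - snd (TR x2 s2 t (Suc (Suc m))))
            + kc xmax Wx Wh U b (Suc (Suc m)) (Wh (Suc (Suc m))) k
              * norm (snd (TR x1 s1 (Suc t) (Suc m)) - snd (TR x2 s2 (Suc t) (Suc m)))"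
    and "norm (snd (TR x1 s1 (Suc t) (Suc (Suc m))) - snd (TR x2 s2 (Suc t) (Suc (Suc m))))
          \<le> A$2$1 * norm (fst (TR x1 s1 t (Suc (Suc m))) - fst (TR x2 s2 t (Suc (Suc m))))
            + A$2$2 * norm (snd (TR x1 s1 t (Suc (Suc m))) - snd (TR x2 s2 t (Suc (Suc m))))
            + kh xmax Wx Wh U b (Suc (Suc m)) (Wh (Suc (Suc m))) k
              * norm (snd (TR x1 s1 (Suc t) (Suc m)) - snd (TR x2 s2 (Suc t) (Suc m)))"
  using layer_diff[OF xmax_nn HG2[OF xmax_nn, of "Suc (Suc m)"] Sset_h1[OF xmax_nn p1] Sset_h1[OF xmax_nn p2] s1 s2]
  unfolding A_def by simp_all

lemma iss_main:
  assumes rho: "\<forall>l\<in>{1..L}. spectral_radius2 (A_s xmax Wx Wh U b l k) < 1"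
  shows "\<exists>\<beta> \<gamma>. class_KL \<beta> \<and> class_Kinf \<gamma> \<and>
              (\<forall>s1 s2 :: nat \<Rightarrow> (real^'c) \<times> (real^'c). \<forall>x1 x2 :: nat \<Rightarrow> real^'x. \<forall>t.
                 (\<forall>l\<in>{1..L}. s1 l \<in> Sset xmax Wx Wh U b l k \<and> s2 l \<in> Sset xmax Wx Wh U b l k)
                 \<and> (\<forall>\<tau>\<le>t. \<forall>i. \<bar>x1 \<tau> $ i\<bar> \<le> xmax \<and> \<bar>x2 \<tau> $ i\<bar> \<le> xmax)
                 \<longrightarrow> state_dist L (lstm_traj Wx Wh U b x1 s1 t) (lstm_traj Wx Wh U b x2 s2 t)
                     \<le> \<beta> (state_dist L s1 s2) t + \<gamma> (input_dist t x1 x2))"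
proof -
  define A where "A l = A_s xmax Wx Wh U b l k" for l
  define p1 where "p1 l = 1 - A l$2$2 + A l$2$1" for l
  define p2 where "p2 l = 1 - A l$1$1 + A l$1$2" for l
  define lamL where "lamL l = 1 - ((1 - A l$1$1) * (1 - A l$2$2) - A l$1$2 * A l$2$1) / max (p1 l) (p2 l)" for l
  define kcL where "kcL l = (if l = 1 then kc xmax Wx Wh U b 1 Wx k else kc xmax Wx Wh U b l (Wh l) k)" for l
  define khL where "khL l = (if l = 1 then kh xmax Wx Wh U b 1 Wx k else kh xmax Wx Wh U b l (Wh l) k)" for l
  define KL where "KL l = p1 l * kcL l + p2 l * khL l" for l
  have Ann1: "0 \<le> A l$1$1" for l unfolding A_def by (rule A_s_nonneg(1)[OF xmax_nn])
  have Ann2: "0 \<le> A l$1$2" for l unfolding A_def by (rule A_s_nonneg(2)[OF xmax_nn])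
  have Ann3: "0 \<le> A l$2$1" for l unfolding A_def by (rule A_s_nonneg(3)[OF xmax_nn])
  have Ann4: "0 \<le> A l$2$2" for l unfolding A_def by (rule A_s_nonneg(4)[OF xmax_nn])
  note Ann = Ann1 Ann2 Ann3 Ann4
  have Alt: "A l$1$1 < 1 \<and> A l$2$2 < 1 \<and> A l$1$2 * A l$2$1 < (1 - A l$1$1) * (1 - A l$2$2)"
    if "l \<in> {1..L}" for l
    using sr2_lt1[OF Ann1[of l] Ann2[of l] Ann3[of l] Ann4[of l]] rho that unfolding A_def by auto
  have p1pos: "0 < p1 l" if "l \<in> {1..L}" for l
    using Alt[OF that] Ann3[of l] by (auto simp: p1_def)
  have p2pos: "0 < p2 l" if "l \<in> {1..L}" for l
    using Alt[OF that] Ann2[of l] by (auto simp: p2_def)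
  have lamL_lt: "lamL l < 1" if "l \<in> {1..L}" for l
  proof -
    have "0 < (1 - A l$1$1) * (1 - A l$2$2) - A l$1$2 * A l$2$1" using Alt[OF that] by simp
    moreover have "0 < max (p1 l) (p2 l)" using p1pos[OF that] by simp
    ultimately show ?thesis unfolding lamL_def by simp
  qed
  define lam where "lam = Max (insert (1/2) (lamL ` {1..L}))"
  define Km where "Km = Max (insert 0 (KL ` {1..L}))"
  define pm where "pm = Min (insert 1 ((\<lambda>l. min (p1 l) (p2 l)) ` {1..L}))"
  define PM where "PM = Max (insert 1 ((\<lambda>l. max (p1 l) (p2 l)) ` {1..L}))"
  have lam_ge: "lamL l \<le> lam" if "l \<in> {1..L}" for l
    unfolding lam_def by (rule Max_ge) (use that in auto)
  have lam_half: "1/2 \<le> lam" unfolding lam_def by (rule Max_ge) auto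
  have lam_lt: "lam < 1" unfolding lam_def using lamL_lt by (subst Max_less_iff) auto
  have Km_ge: "KL l \<le> Km" if "l \<in> {1..L}" for l
    unfolding Km_def by (rule Max_ge) (use that in auto)
  have Km0: "0 \<le> Km" unfolding Km_def by (rule Max_ge) auto
  have pm_pos: "0 < pm" unfolding pm_def using p1pos p2pos by (subst Min_gr_iff) auto
  have pm_le1: "pm \<le> 1" unfolding pm_def by (rule Min_le) auto
  have pm_le': "pm \<le> min (p1 l) (p2 l)" if "l \<in> {1..L}" for l
    unfolding pm_def by (rule Min_le) (use that in auto)
  have pm_le1': "pm \<le> p1 l" if "l \<in> {1..L}" for l using pm_le'[OF that] by simp
  have pm_le2': "pm \<le> p2 l" if "l \<in> {1..L}" for l using pm_le'[OF that] by simp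
  have PM_ge': "max (p1 l) (p2 l) \<le> PM" if "l \<in> {1..L}" for l
    unfolding PM_def by (rule Max_ge) (use that in auto)
  have PM1: "1 \<le> PM" unfolding PM_def by (rule Max_ge) auto
  define K2 where "K2 = Km / pm"
  have K2: "0 \<le> K2" "Km \<le> K2" using Km0 pm_pos pm_le1
    by (auto simp: K2_def field_simps intro: mult_left_le)
  define e where "e = (1 - lam) / (2 * (K2 + 1))"
  have e0: "0 < e" using lam_lt K2 by (simp add: e_def)
  have eK: "K2 * e \<le> (1 - lam) / 2"
  proof -
    have "K2 * e = (1 - lam) / 2 * (K2 / (K2 + 1))" by (simp add: e_def field_simps)
    also have "\<dots> \<le> (1 - lam) / 2 * 1"
    proof (rule mult_left_mono)
      show "K2 / (K2 + 1) \<le> 1" using K2 by simp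
      show "0 \<le> (1 - lam) / 2" using lam_lt by simp
    qed
    finally show ?thesis by simp
  qed
  have e1: "e \<le> 1"
  proof -
    have "e \<le> (1 - lam) / 2" unfolding e_def using lam_lt K2
      by (intro frac_le) auto
    then show ?thesis using lam_half by simp
  qed
  define q where "q = 1 - K2 * e"
  have Ke0: "0 \<le> K2 * e" using K2 e0 by simp
  have q: "0 < q" "lam < q" "q \<le> 1" using eK lam_lt lam_half Ke0 by (auto simp: q_def)
  define mu where "mu = lam / q"
  have mu: "0 < mu" "mu < 1" using q lam_half by (auto simp: mu_def field_simps)
  define Q where "Q = K2 * e / q"
  have Q0: "0 \<le> Q" using K2 e0 q by (simp add: Q_def)
  define C1 where "C1 = 2 * real L * PM / (pm * e^L) + 1"
  define C2 where "C2 = Q / ((1 - mu) * pm * e^L) + 1"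
  have C1: "0 < C1" unfolding C1_def using PM1 pm_pos e0
    by (intro add_nonneg_pos divide_nonneg_pos mult_nonneg_nonneg mult_pos_pos zero_less_power) auto
  have C2: "0 < C2" unfolding C2_def using Q0 mu pm_pos e0
    by (intro add_nonneg_pos divide_nonneg_pos mult_nonneg_nonneg mult_pos_pos zero_less_power) auto
  have vstep: "p1 l * x' + p2 l * y' \<le> lam * (p1 l * x + p2 l * y) + Km * u"
    if l: "l \<in> {1..L}" and xyu: "0 \<le> x" "0 \<le> y" "0 \<le> u"
      and h1: "x' \<le> A l$1$1 * x + A l$1$2 * y + kcL l * u"
      and h2: "y' \<le> A l$2$1 * x + A l$2$2 * y + khL l * u" for l x y u x' y'
  proof -
    have "p1 l * x' + p2 l * y' \<le> lamL l * (p1 l * x + p2 l * y) + KL l * u"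
      using lyap2[OF Ann1[of l] Ann2[of l] Ann3[of l] Ann4[of l] Alt[OF l, THEN conjunct1] Alt[OF l, THEN conjunct2, THEN conjunct1] Alt[OF l, THEN conjunct2, THEN conjunct2] xyu h1 h2] unfolding p1_def p2_def lamL_def KL_def .
    also have "\<dots> \<le> lam * (p1 l * x + p2 l * y) + Km * u"
      using lam_ge[OF l] Km_ge[OF l] xyu p1pos[OF l] p2pos[OF l]
      by (intro add_mono mult_right_mono) auto
    finally show ?thesis .
  qed
  have main: "state_dist L (TR x1 s1 t) (TR x2 s2 t) \<le> C1 * mu ^ t * state_dist L s1 s2 + C2 * input_dist t x1 x2"
    if H: "(\<forall>l\<in>{1..L}. s1 l \<in> Sset xmax Wx Wh U b l k \<and> s2 l \<in> Sset xmax Wx Wh U b l k)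
                 \<and> (\<forall>\<tau>\<le>t. \<forall>i. \<bar>x1 \<tau> $ i\<bar> \<le> xmax \<and> \<bar>x2 \<tau> $ i\<bar> \<le> xmax)"
    for s1 s2 :: "nat \<Rightarrow> (real^'c) \<times> (real^'c)" and x1 x2 :: "nat \<Rightarrow> real^'x" and t
  proof -
    have inv1: "TR x1 s1 t' l \<in> Sset xmax Wx Wh U b l k" if "t' \<le> t" "l \<in> {1..L}" for t' l
    proof -
      have "\<forall>l\<in>{1..L}. TR x1 s1 t' l \<in> Sset xmax Wx Wh U b l k"
        by (rule traj_inv[OF xmax_nn]) (use H that in auto)
      then show ?thesis using that by blast
    qed
    have inv2: "TR x2 s2 t' l \<in> Sset xmax Wx Wh U b l k" if "t' \<le> t" "l \<in> {1..L}" for t' l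
    proof -
      have "\<forall>l\<in>{1..L}. TR x2 s2 t' l \<in> Sset xmax Wx Wh U b l k"
        by (rule traj_inv[OF xmax_nn]) (use H that in auto)
      then show ?thesis using that by blast
    qed
    define dc where "dc l t' = norm (fst (TR x1 s1 t' l) - fst (TR x2 s2 t' l))" for l t'
    define dh where "dh l t' = norm (snd (TR x1 s1 t' l) - snd (TR x2 s2 t' l))" for l t'
    define V where "V l t' = p1 l * dc l t' + p2 l * dh l t'" for l t'
    define dx where "dx t' = norm (x1 t' - x2 t')" for t'
    have V0: "0 \<le> V l t'" if "l \<in> {1..L}" for l t'
      using p1pos[OF that] p2pos[OF that] by (simp add: V_def dc_def dh_def)
    have S1: "V 1 (Suc t') \<le> lam * V 1 t' + K2 * dx t'" if "t' < t" "1 \<le> L" for t'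
    proof -
      have l1: "(1::nat) \<in> {1..L}" using that by simp
      have i1: "TR x1 s1 t' 1 \<in> Sset xmax Wx Wh U b 1 k" using inv1 that l1 by simp
      have i2: "TR x2 s2 t' 1 \<in> Sset xmax Wx Wh U b 1 k" using inv2 that l1 by simp
      have xb1: "\<bar>x1 t' $ j\<bar> \<le> xmax" for j using H that by simp
      have xb2: "\<bar>x2 t' $ j\<bar> \<le> xmax" for j using H that by simp
      note ts = traj_step1[OF i1 i2 xb1 xb2]
      have "V 1 (Suc t') \<le> lam * V 1 t' + Km * dx t'"
        unfolding V_def dc_def dh_def dx_def
        apply (rule vstep[OF l1])
        using ts that H by (auto simp: A_def kcL_def khL_def)
      also have "\<dots> \<le> lam * V 1 t' + K2 * dx t'"
        using K2 by (intro add_left_mono mult_right_mono) (auto simp: dx_def)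
      finally show ?thesis .
    qed
    have Sl: "V l (Suc t') \<le> lam * V l t' + K2 * V (l - 1) (Suc t')" if Slh: "t' < t" "2 \<le> l" "l \<le> L" for t' l
    proof -
      obtain m where m: "l = Suc (Suc m)" using Slh(2) by (metis add_2_eq_Suc le_Suc_ex)
      have lL: "l \<in> {1..L}" and mL: "Suc m \<in> {1..L}" using that m by auto
      have i1: "TR x1 s1 t' (Suc (Suc m)) \<in> Sset xmax Wx Wh U b (Suc (Suc m)) k" using inv1 that lL m by simp
      have i2: "TR x2 s2 t' (Suc (Suc m)) \<in> Sset xmax Wx Wh U b (Suc (Suc m)) k" using inv2 that lL m by simp
      have j1: "TR x1 s1 (Suc t') (Suc m) \<in> Sset xmax Wx Wh U b (Suc m) k" using inv1 that mL by simp
      have j2: "TR x2 s2 (Suc t') (Suc m) \<in> Sset xmax Wx Wh U b (Suc m) k" using inv2 that mL by simp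
      note ts = traj_stepl[OF i1 i2 j1 j2]
      have "V l (Suc t') \<le> lam * V l t' + Km * dh (Suc m) (Suc t')"
        unfolding V_def dc_def dh_def
        apply (rule vstep[OF lL])
        using ts that by (auto simp: A_def kcL_def khL_def m)
      also have "Km * dh (Suc m) (Suc t') \<le> K2 * V (l - 1) (Suc t')"
      proof -
        have "pm * dh (Suc m) (Suc t') \<le> V (Suc m) (Suc t')"
          using pm_le2'[OF mL] p1pos[OF mL] unfolding V_def
          by (intro order_trans[OF mult_right_mono[of pm "p2 (Suc m)"]]) (auto simp: dc_def dh_def)
        then have "Km / pm * (pm * dh (Suc m) (Suc t')) \<le> Km / pm * V (Suc m) (Suc t')"
          using Km0 pm_pos by (intro mult_left_mono) auto
        then show ?thesis using pm_pos by (simp add: K2_def m)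
      qed
      finally show ?thesis by simp
    qed
    define Wt where "Wt t' = (\<Sum>l=1..L. e^l * V l t')" for t'
    have Wrec: "Wt (Suc t') \<le> mu * Wt t' + Q * dx t'" if "t' < t" for t'
    proof -
      have c: "(\<Sum>l=1..L. e^l * V l (Suc t')) \<le> lam * (\<Sum>l=1..L. e^l * V l t') + K2 * e * dx t'
            + K2 * e * (\<Sum>l=1..L-1. e^l * V l (Suc t'))"
        by (rule cascade[of L "\<lambda>l. V l (Suc t')" lam "\<lambda>l. V l t'" K2 "dx t'" e L])
           (use S1 Sl that e0 K2 in \<open>auto simp: dx_def\<close>)
      have "(\<Sum>l=1..L-1. e^l * V l (Suc t')) \<le> (\<Sum>l=1..L. e^l * V l (Suc t'))"
        using V0 e0 by (intro sum_mono2) auto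
      then have "K2 * e * (\<Sum>l=1..L-1. e^l * V l (Suc t')) \<le> K2 * e * Wt (Suc t')"
        unfolding Wt_def using K2 e0 by (intro mult_left_mono) auto
      with c have "Wt (Suc t') \<le> lam * Wt t' + K2 * e * dx t' + K2 * e * Wt (Suc t')"
        unfolding Wt_def by linarith
      then have "Wt (Suc t') * q \<le> lam * Wt t' + K2 * e * dx t'"
        by (simp add: q_def algebra_simps)
      then have "Wt (Suc t') \<le> (lam * Wt t' + K2 * e * dx t') / q"
        using q by (simp add: pos_le_divide_eq)
      also have "\<dots> = mu * Wt t' + Q * dx t'" by (simp add: mu_def Q_def add_divide_distrib)
      finally show ?thesis .
    qed
    define M where "M = input_dist t x1 x2"
    have dxM: "dx t' \<le> M" if "t' < t" for t'
      unfolding M_def input_dist_def dx_def using that by (intro Max_ge) auto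
    have M0: "0 \<le> M" using dxM[of 0] unfolding M_def input_dist_def
      by (intro order_trans[OF norm_ge_zero Max_ge[of _ "norm (x1 0 - x2 0)"]]) auto
    have unr: "Wt t \<le> mu^t * Wt 0 + Q / (1 - mu) * M"
      by (rule unroll[where W=Wt and d=dx and t=t and mu=mu and Q=Q and M=M, OF Wrec dxM]) (use mu Q0 M0 in auto)
    have B1: "state_dist L (TR x1 s1 t) (TR x2 s2 t) \<le> Wt t / (pm * e^L)"
    proof -
      have "state_dist L (TR x1 s1 t) (TR x2 s2 t) \<le> (\<Sum>l=1..L. dc l t + dh l t)"
        using sd_le_sum unfolding dc_def dh_def .
      also have "\<dots> \<le> (\<Sum>l=1..L. e^l * V l t / (pm * e^L))"
      proof (rule sum_mono)
        fix l assume l: "l \<in> {1..L}"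
        have "pm * (dc l t + dh l t) \<le> V l t"
          unfolding V_def using pm_le1'[OF l] pm_le2'[OF l]
          by (simp add: distrib_left add_mono mult_right_mono dc_def dh_def)
        moreover have "e^L \<le> e^l" using l e0 e1 by (intro power_decreasing) auto
        ultimately have "e^L * (pm * (dc l t + dh l t)) \<le> e^l * V l t"
          using e0 V0[OF l] pm_pos by (intro mult_mono) (auto simp: dc_def dh_def)
        then show "dc l t + dh l t \<le> e^l * V l t / (pm * e^L)"
          using pm_pos e0 by (simp add: pos_le_divide_eq algebra_simps)
      qed
      also have "\<dots> = Wt t / (pm * e^L)" unfolding Wt_def by (simp add: sum_divide_distrib)
      finally show ?thesis .
    qed
    define sd0 where "sd0 = state_dist L s1 s2"
    have B2: "Wt 0 \<le> 2 * real L * PM * sd0"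
    proof -
      have "Wt 0 \<le> (\<Sum>l=1..L. 2 * PM * sd0)"
        unfolding Wt_def
      proof (rule sum_mono)
        fix l assume l: "l \<in> {1..L}"
        have "e^l * V l 0 \<le> 1 * V l 0" using e0 e1 V0[OF l] by (intro mult_right_mono power_le_one) auto
        also have "\<dots> \<le> PM * dc l 0 + PM * dh l 0"
          unfolding V_def using PM_ge'[OF l] by (simp add: add_mono mult_right_mono dc_def dh_def)
        also have "\<dots> \<le> PM * sd0 + PM * sd0"
          using comp_le_sd[OF l, of s1 s2] PM1 unfolding dc_def dh_def sd0_def
          by (intro add_mono mult_left_mono) auto
        finally show "e^l * V l 0 \<le> 2 * PM * sd0" by simp
      qed
      also have "\<dots> = 2 * real L * PM * sd0" by simp
      finally show ?thesis .
    qed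
    have "state_dist L (TR x1 s1 t) (TR x2 s2 t) \<le> (mu^t * Wt 0 + Q / (1 - mu) * M) / (pm * e^L)"
      using B1 unr pm_pos e0 by (smt (verit) divide_right_mono zero_less_mult_iff zero_less_power)
    also have "\<dots> \<le> (mu^t * (2 * real L * PM * sd0) + Q / (1 - mu) * M) / (pm * e^L)"
      using B2 mu pm_pos e0 Q0 M0 by (intro divide_right_mono add_mono mult_left_mono) auto
    also have "\<dots> = (2 * real L * PM / (pm * e^L)) * mu^t * sd0 + (Q / ((1 - mu) * pm * e^L)) * M"
      using pm_pos e0 mu by (simp add: field_simps)
    also have "\<dots> \<le> C1 * mu^t * sd0 + C2 * M"
    proof -
      have sd0: "0 \<le> sd0" unfolding sd0_def state_dist_def by (simp add: sum_nonneg)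
      show ?thesis unfolding C1_def C2_def using sd0 M0 mu
        by (intro add_mono mult_right_mono) auto
    qed
    finally show ?thesis
      by (simp add: sd0_def M_def)
  qed
  show ?thesis
    apply (intro exI[of _ "\<lambda>s t. C1 * mu^t * s"] exI[of _ "\<lambda>r. C2 * r"] conjI allI impI)
    using KL_lin[OF C1 mu] Kinf_lin[OF C2] main by auto
qed

end

theorem theorem4p2:
  fixes L :: nat and xmax :: real
    and Wx :: "gate \<Rightarrow> real^'x^'c" and Wh :: "nat \<Rightarrow> gate \<Rightarrow> real^'c^'c"
    and U :: "nat \<Rightarrow> gate \<Rightarrow> real^'c^'c" and b :: "nat \<Rightarrow> gate \<Rightarrow> real^'c"
    and k :: nat
  assumes xmax_pos: "xmax > 0"
  shows "((\<forall>l\<in>{1..L}. spectral_radius2 (A_s xmax Wx Wh U b l k) < 1) \<longrightarrow>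
           (\<exists>\<beta> \<gamma>. class_KL \<beta> \<and> class_Kinf \<gamma> \<and>
              (\<forall>s1 s2 :: nat \<Rightarrow> (real^'c) \<times> (real^'c). \<forall>x1 x2 :: nat \<Rightarrow> real^'x. \<forall>t.
                 (\<forall>l\<in>{1..L}. s1 l \<in> Sset xmax Wx Wh U b l k \<and> s2 l \<in> Sset xmax Wx Wh U b l k)
                 \<and> (\<forall>\<tau>\<le>t. \<forall>i. \<bar>x1 \<tau> $ i\<bar> \<le> xmax \<and> \<bar>x2 \<tau> $ i\<bar> \<le> xmax)
                 \<longrightarrow> state_dist L (lstm_traj Wx Wh U b x1 s1 t) (lstm_traj Wx Wh U b x2 s2 t)
                     \<le> \<beta> (state_dist L s1 s2) t + \<gamma> (input_dist t x1 x2))))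
         \<and> (\<forall>k'. \<forall>l\<in>{1..L}.
              spectral_radius2 (A_s xmax Wx Wh U b l (Suc k'))
                \<le> spectral_radius2 (A_s xmax Wx Wh U b l k'))"
proof -
  have xn: "xmax \<ge> 0" using xmax_pos by simp
  show ?thesis
  proof
    show "(\<forall>l\<in>{1..L}. spectral_radius2 (A_s xmax Wx Wh U b l k) < 1) \<longrightarrow>
           (\<exists>\<beta> \<gamma>. class_KL \<beta> \<and> class_Kinf \<gamma> \<and>
              (\<forall>s1 s2 :: nat \<Rightarrow> (real^'c) \<times> (real^'c). \<forall>x1 x2 :: nat \<Rightarrow> real^'x. \<forall>t.
                 (\<forall>l\<in>{1..L}. s1 l \<in> Sset xmax Wx Wh U b l k \<and> s2 l \<in> Sset xmax Wx Wh U b l k)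
                 \<and> (\<forall>\<tau>\<le>t. \<forall>i. \<bar>x1 \<tau> $ i\<bar> \<le> xmax \<and> \<bar>x2 \<tau> $ i\<bar> \<le> xmax)
                 \<longrightarrow> state_dist L (lstm_traj Wx Wh U b x1 s1 t) (lstm_traj Wx Wh U b x2 s2 t)
                     \<le> \<beta> (state_dist L s1 s2) t + \<gamma> (input_dist t x1 x2)))"
      using iss_main[OF xn] by blast
    show "\<forall>k'. \<forall>l\<in>{1..L}.
              spectral_radius2 (A_s xmax Wx Wh U b l (Suc k'))
                \<le> spectral_radius2 (A_s xmax Wx Wh U b l k')"
      using sr_dec[OF xn] by blast
  qed
qed

end
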